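(* Let $\mathcal C$ be a category and $S\colon\mathcal C\to\mathcal C$ an auto-equivalence. Then: (1) $S'$ is an automorphism of the category $\mathcal C_{/S}\#\mathbb Z$; (2) $H\colon\mathcal C\to\mathcal C_{/S}\#\mathbb Z$ is an equivalence; (3) $S'H\cong HS$ (natural isomorphism).
   Context: $\Bbbk$ is a commutative ring; all categories and functors are $\Bbbk$-linear. The colimit orbit category $\mathcal C_{/S}$ is the $\mathbb Z$-graded category with the objects of $\mathcal C$ and $\mathcal C_{/S}(X,Y)=\bigoplus_{r\in\mathbb Z}\mathcal C^r_{/S}(X,Y)$, where $\mathcal C^r_{/S}(X,Y):=\varinjlim_{m\ge r}\mathcal C(S^{m-r}X,S^mY)$, the transition maps $\mathcal C(S^{m-r}X,S^mY)\to\mathcal C(S^{m+1-r}X,S^{m+1}Y)$ being given by $S$; composition of $[g]\in\mathcal C^b_{/S}(Y,Z)$ represented by $g\colon S^{m-b}Y\to S^mZ$ and $[f]\in\mathcal C^a_{/S}(X,Y)$ represented by $f\colon S^{m-b-a}X\to S^{m-b}Y$ is $[gf]\in\mathcal C^{a+b}_{/S}(X,Z)$, extended bilinearly. For a $\mathbb Z$-graded category $\mathcal B$, $\mathcal B\#\mathbb Z$ has objects $X^{(i)}$ ($X\in\mathcal B$, $i\in\mathbb Z$), $(\mathcal B\#\mathbb Z)(X^{(i)},Y^{(j)})=\mathcal B^{i-j}(X,Y)$, composition from $\mathcal B$. $S'\colon\mathcal C_{/S}\#\mathbb Z\to\mathcal C_{/S}\#\mathbb Z$ is $S'X^{(i)}=X^{(i-1)}$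 and the identity map $\mathcal C^{i-j}_{/S}(X,Y)\to\mathcal C^{i-j}_{/S}(X,Y)$ on morphisms. $H\colon\mathcal C\to\mathcal C_{/S}\#\mathbb Z$ is $HX=X^{(0)}$, $Hf=[f]\in\varinjlim_{m\ge0}\mathcal C(S^mX,S^mY)$. *)

theory Defs
  imports Main
begin

text \<open>Composition,
identities and the k-module structure of each hom-set are indexed by the
objects involved (so different hom-sets may share elements of the type).\<close>

record ('o, 'm, 'k) lcat =
  cOb   :: "'o set"
  cHom  :: "'o \<Rightarrow> 'o \<Rightarrow> 'm set"
  cComp :: "'o \<Rightarrow> 'o \<Rightarrow> 'o \<Rightarrow> 'm \<Rightarrow> 'm \<Rightarrow> 'm"
  cId   :: "'o \<Rightarrow> 'm"
  cAdd  :: "'o \<Rightarrow> 'o \<Rightarrow> 'm \<Rightarrow> 'm \<Rightarrow> 'm"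
  cZero :: "'o \<Rightarrow> 'o \<Rightarrow> 'm"
  cSmul :: "'o \<Rightarrow> 'o \<Rightarrow> 'k \<Rightarrow> 'm \<Rightarrow> 'm"

definition hom_module :: "('o, 'm, 'k::comm_ring_1) lcat \<Rightarrow> 'o \<Rightarrow> 'o \<Rightarrow> bool" where
  "hom_module C X Y \<longleftrightarrow>
    (let M = cHom C X Y; ad = cAdd C X Y; z = cZero C X Y; sm = cSmul C X Y in
      z \<in> M \<and>
      (\<forall>f\<in>M. \<forall>g\<in>M. ad f g \<in> M) \<and>
      (\<forall>a. \<forall>f\<in>M. sm a f \<in> M) \<and>
      (\<forall>f\<in>M. \<forall>g\<in>M. \<forall>h\<in>M. ad (ad f g) h = ad f (ad g h)) \<and>
      (\<forall>f\<in>M. \<forall>g\<in>M. ad f g = ad g f) \<and>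
      (\<forall>f\<in>M. ad z f = f) \<and>
      (\<forall>f\<in>M. \<exists>g\<in>M. ad f g = z) \<and>
      (\<forall>a. \<forall>f\<in>M. \<forall>g\<in>M. sm a (ad f g) = ad (sm a f) (sm a g)) \<and>
      (\<forall>a b. \<forall>f\<in>M. sm (a + b) f = ad (sm a f) (sm b f)) \<and>
      (\<forall>a b. \<forall>f\<in>M. sm (a * b) f = sm a (sm b f)) \<and>
      (\<forall>f\<in>M. sm 1 f = f))"

definition klin_cat :: "('o, 'm, 'k::comm_ring_1) lcat \<Rightarrow> bool" where
  "klin_cat C \<longleftrightarrow>
    (\<forall>X\<in>cOb C. \<forall>Y\<in>cOb C. hom_module C X Y) \<and>
    (\<forall>X\<in>cOb C. cId C X \<in> cHom C X X) \<and>
    (\<forall>X\<in>cOb C. \<forall>Y\<in>cOb C. \<forall>Z\<in>cOb C. \<forall>f\<in>cHom C X Y. \<forall>g\<in>cHom C Y Z.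
        cComp C X Y Z g f \<in> cHom C X Z) \<and>
    (\<forall>W\<in>cOb C. \<forall>X\<in>cOb C. \<forall>Y\<in>cOb C. \<forall>Z\<in>cOb C.
       \<forall>f\<in>cHom C W X. \<forall>g\<in>cHom C X Y. \<forall>h\<in>cHom C Y Z.
        cComp C W Y Z h (cComp C W X Y g f) = cComp C W X Z (cComp C X Y Z h g) f) \<and>
    (\<forall>X\<in>cOb C. \<forall>Y\<in>cOb C. \<forall>f\<in>cHom C X Y.
        cComp C X Y Y (cId C Y) f = f \<and> cComp C X X Y f (cId C X) = f) \<and>
    (\<forall>X\<in>cOb C. \<forall>Y\<in>cOb C. \<forall>Z\<in>cOb C. \<forall>f\<in>cHom C X Y. \<forall>f'\<in>cHom C X Y.
       \<forall>g\<in>cHom C Y Z. \<forall>g'\<in>cHom C Y Z. \<forall>a.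
        cComp C X Y Z (cAdd C Y Z g g') f = cAdd C X Z (cComp C X Y Z g f) (cComp C X Y Z g' f) \<and>
        cComp C X Y Z g (cAdd C X Y f f') = cAdd C X Z (cComp C X Y Z g f) (cComp C X Y Z g f') \<and>
        cComp C X Y Z (cSmul C Y Z a g) f = cSmul C X Z a (cComp C X Y Z g f) \<and>
        cComp C X Y Z g (cSmul C X Y a f) = cSmul C X Z a (cComp C X Y Z g f))"

record ('o, 'm, 'p, 'n) lfun =
  fob  :: "'o \<Rightarrow> 'p"
  fmor :: "'o \<Rightarrow> 'o \<Rightarrow> 'm \<Rightarrow> 'n"

definition klin_functor ::
  "('o, 'm, 'k::comm_ring_1) lcat \<Rightarrow> ('p, 'n, 'k) lcat \<Rightarrow> ('o, 'm, 'p, 'n) lfun \<Rightarrow> bool" where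
  "klin_functor C D F \<longleftrightarrow> klin_cat C \<and> klin_cat D \<and>
    (\<forall>X\<in>cOb C. fob F X \<in> cOb D) \<and>
    (\<forall>X\<in>cOb C. \<forall>Y\<in>cOb C. \<forall>f\<in>cHom C X Y. fmor F X Y f \<in> cHom D (fob F X) (fob F Y)) \<and>
    (\<forall>X\<in>cOb C. fmor F X X (cId C X) = cId D (fob F X)) \<and>
    (\<forall>X\<in>cOb C. \<forall>Y\<in>cOb C. \<forall>Z\<in>cOb C. \<forall>f\<in>cHom C X Y. \<forall>g\<in>cHom C Y Z.
       fmor F X Z (cComp C X Y Z g f) = cComp D (fob F X) (fob F Y) (fob F Z) (fmor F Y Z g) (fmor F X Y f)) \<and>
    (\<forall>X\<in>cOb C. \<forall>Y\<in>cOb C. \<forall>f\<in>cHom C X Y. \<forall>g\<in>cHom C X Y. \<forall>a.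
       fmor F X Y (cAdd C X Y f g) = cAdd D (fob F X) (fob F Y) (fmor F X Y f) (fmor F X Y g) \<and>
       fmor F X Y (cSmul C X Y a f) = cSmul D (fob F X) (fob F Y) a (fmor F X Y f))"

definition fid :: "('o, 'm, 'o, 'm) lfun" where
  "fid = \<lparr>fob = (\<lambda>X. X), fmor = (\<lambda>X Y f. f)\<rparr>"

definition fun_comp :: "('p, 'n, 'q, 'r) lfun \<Rightarrow> ('o, 'm, 'p, 'n) lfun \<Rightarrow> ('o, 'm, 'q, 'r) lfun" where
  "fun_comp G F = \<lparr>fob = (\<lambda>X. fob G (fob F X)),
                fmor = (\<lambda>X Y f. fmor G (fob F X) (fob F Y) (fmor F X Y f))\<rparr>"

definition is_iso :: "('o, 'm, 'k) lcat \<Rightarrow> 'o \<Rightarrow> 'o \<Rightarrow> 'm \<Rightarrow> bool" where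
  "is_iso D X Y u \<longleftrightarrow> u \<in> cHom D X Y \<and>
     (\<exists>v\<in>cHom D Y X. cComp D X Y X v u = cId D X \<and> cComp D Y X Y u v = cId D Y)"

definition nat_iso ::
  "('o, 'm, 'k::comm_ring_1) lcat \<Rightarrow> ('p, 'n, 'k) lcat \<Rightarrow> ('o, 'm, 'p, 'n) lfun \<Rightarrow>
   ('o, 'm, 'p, 'n) lfun \<Rightarrow> ('o \<Rightarrow> 'n) \<Rightarrow> bool" where
  "nat_iso C D F G \<eta> \<longleftrightarrow> klin_functor C D F \<and> klin_functor C D G \<and>
    (\<forall>X\<in>cOb C. is_iso D (fob F X) (fob G X) (\<eta> X)) \<and>
    (\<forall>X\<in>cOb C. \<forall>Y\<in>cOb C. \<forall>f\<in>cHom C X Y.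
       cComp D (fob F X) (fob G X) (fob G Y) (fmor G X Y f) (\<eta> X)
     = cComp D (fob F X) (fob F Y) (fob G Y) (\<eta> Y) (fmor F X Y f))"

definition klin_equivalence ::
  "('o, 'm, 'k::comm_ring_1) lcat \<Rightarrow> ('p, 'n, 'k) lcat \<Rightarrow> ('o, 'm, 'p, 'n) lfun \<Rightarrow> bool" where
  "klin_equivalence C D F \<longleftrightarrow> klin_functor C D F \<and>
    (\<exists>G :: ('p, 'n, 'o, 'm) lfun. klin_functor D C G \<and>
       (\<exists>\<eta>. nat_iso C C fid (fun_comp G F) \<eta>) \<and>
       (\<exists>\<epsilon>. nat_iso D D (fun_comp F G) fid \<epsilon>))"

definition klin_automorphism :: "('o, 'm, 'k::comm_ring_1) lcat \<Rightarrow> ('o, 'm, 'o, 'm) lfun \<Rightarrow> bool" where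
  "klin_automorphism C F \<longleftrightarrow> klin_functor C C F \<and>
    (\<exists>G. klin_functor C C G \<and>
       (\<forall>X\<in>cOb C. fob G (fob F X) = X \<and> fob F (fob G X) = X) \<and>
       (\<forall>X\<in>cOb C. \<forall>Y\<in>cOb C. \<forall>f\<in>cHom C X Y.
          fmor (fun_comp G F) X Y f = f \<and> fmor (fun_comp F G) X Y f = f))"

definition Spow :: "('o, 'm, 'o, 'm) lfun \<Rightarrow> nat \<Rightarrow> 'o \<Rightarrow> 'o" where
  "Spow S k X = (fob S ^^ k) X"

fun Smpow :: "('o, 'm, 'o, 'm) lfun \<Rightarrow> nat \<Rightarrow> 'o \<Rightarrow> 'o \<Rightarrow> 'm \<Rightarrow> 'm" where
  "Smpow S 0 X Y f = f"
| "Smpow S (Suc k) X Y f = fmor S (Spow S k X) (Spow S k Y) (Smpow S k X Y f)"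

text \<open>A representative of an element of C^r_{/S}(X,Y) is a triple (n,p,f) with
f : S^n X \<rightarrow> S^p Y and p - n = r (so n = m - r, p = m, with n,p \<ge> 0).
Two representatives are identified iff they become equal after applying
suitable powers of S (the transition maps of the directed system).\<close>

definition orb_reps :: "('o, 'm, 'k) lcat \<Rightarrow> ('o, 'm, 'o, 'm) lfun \<Rightarrow> 'o \<Rightarrow> 'o \<Rightarrow> int
    \<Rightarrow> (nat \<times> nat \<times> 'm) set" where
  "orb_reps C S X Y r = {(n, p, f). int p - int n = r \<and> f \<in> cHom C (Spow S n X) (Spow S p Y)}"

definition orb_rel :: "('o, 'm, 'k) lcat \<Rightarrow> ('o, 'm, 'o, 'm) lfun \<Rightarrow> 'o \<Rightarrow> 'o \<Rightarrow> int
    \<Rightarrow> ((nat \<times> nat \<times> 'm) \<times> (nat \<times> nat \<times> 'm)) set" where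
  "orb_rel C S X Y r = {((n, p, f), (n', p', f')).
      (n, p, f) \<in> orb_reps C S X Y r \<and> (n', p', f') \<in> orb_reps C S X Y r \<and>
      (\<exists>k k'. n + k = n' + k' \<and>
         Smpow S k (Spow S n X) (Spow S p Y) f = Smpow S k' (Spow S n' X) (Spow S p' Y) f')}"

definition orb_hom :: "('o, 'm, 'k) lcat \<Rightarrow> ('o, 'm, 'o, 'm) lfun \<Rightarrow> 'o \<Rightarrow> 'o \<Rightarrow> int
    \<Rightarrow> (nat \<times> nat \<times> 'm) set set" where
  "orb_hom C S X Y r = orb_reps C S X Y r // orb_rel C S X Y r"

definition orb_cls :: "('o, 'm, 'k) lcat \<Rightarrow> ('o, 'm, 'o, 'm) lfun \<Rightarrow> 'o \<Rightarrow> 'o \<Rightarrow> int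
    \<Rightarrow> nat \<times> nat \<times> 'm \<Rightarrow> (nat \<times> nat \<times> 'm) set" where
  "orb_cls C S X Y r a = orb_rel C S X Y r `` {a}"

definition orb_add :: "('o, 'm, 'k) lcat \<Rightarrow> ('o, 'm, 'o, 'm) lfun \<Rightarrow> 'o \<Rightarrow> 'o \<Rightarrow> int
    \<Rightarrow> (nat \<times> nat \<times> 'm) set \<Rightarrow> (nat \<times> nat \<times> 'm) set \<Rightarrow> (nat \<times> nat \<times> 'm) set" where
  "orb_add C S X Y r c d =
    (case SOME a. a \<in> c of (n, p, f) \<Rightarrow>
     case SOME a. a \<in> d of (n', p', f') \<Rightarrow>
       (let N = max n n'; P = p + (N - n) in
        orb_cls C S X Y r (N, P,
          cAdd C (Spow S N X) (Spow S P Y)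
            (Smpow S (N - n) (Spow S n X) (Spow S p Y) f)
            (Smpow S (N - n') (Spow S n' X) (Spow S p' Y) f'))))"

definition orb_zero :: "('o, 'm, 'k) lcat \<Rightarrow> ('o, 'm, 'o, 'm) lfun \<Rightarrow> 'o \<Rightarrow> 'o \<Rightarrow> int
    \<Rightarrow> (nat \<times> nat \<times> 'm) set" where
  "orb_zero C S X Y r = orb_cls C S X Y r
     (nat (- r), nat r, cZero C (Spow S (nat (- r)) X) (Spow S (nat r) Y))"

definition orb_smul :: "('o, 'm, 'k) lcat \<Rightarrow> ('o, 'm, 'o, 'm) lfun \<Rightarrow> 'o \<Rightarrow> 'o \<Rightarrow> int
    \<Rightarrow> 'k \<Rightarrow> (nat \<times> nat \<times> 'm) set \<Rightarrow> (nat \<times> nat \<times> 'm) set" where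
  "orb_smul C S X Y r a c =
    (case SOME x. x \<in> c of (n, p, f) \<Rightarrow>
       orb_cls C S X Y r (n, p, cSmul C (Spow S n X) (Spow S p Y) a f))"

text \<open>Composition of [g] in C^b(Y,Z) with [f] in C^a(X,Y): lift both representatives
so that they meet at a common power of S applied to Y, then compose.\<close>

definition orb_comp :: "('o, 'm, 'k) lcat \<Rightarrow> ('o, 'm, 'o, 'm) lfun \<Rightarrow> 'o \<Rightarrow> 'o \<Rightarrow> 'o \<Rightarrow> int \<Rightarrow> int
    \<Rightarrow> (nat \<times> nat \<times> 'm) set \<Rightarrow> (nat \<times> nat \<times> 'm) set \<Rightarrow> (nat \<times> nat \<times> 'm) set" where
  "orb_comp C S X Y Z b a g f =
    (case SOME x. x \<in> g of (n1, p1, g0) \<Rightarrow>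
     case SOME x. x \<in> f of (n2, p2, f0) \<Rightarrow>
       (let N = max n1 p2; s = n2 + (N - p2); t = p1 + (N - n1) in
        orb_cls C S X Z (a + b) (s, t,
          cComp C (Spow S s X) (Spow S N Y) (Spow S t Z)
            (Smpow S (N - n1) (Spow S n1 Y) (Spow S p1 Z) g0)
            (Smpow S (N - p2) (Spow S n2 X) (Spow S p2 Y) f0))))"

section \<open>The smash product C_{/S} # Z, the functors S' and H\<close>

definition orbit_smash :: "('o, 'm, 'k) lcat \<Rightarrow> ('o, 'm, 'o, 'm) lfun
    \<Rightarrow> ('o \<times> int, (nat \<times> nat \<times> 'm) set, 'k) lcat" where
  "orbit_smash C S = \<lparr>
     cOb = cOb C \<times> UNIV,
     cHom = (\<lambda>(X, i) (Y, j). orb_hom C S X Y (i - j)),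
     cComp = (\<lambda>(X, i) (Y, j) (Z, k) g f. orb_comp C S X Y Z (j - k) (i - j) g f),
     cId = (\<lambda>(X, i). orb_cls C S X X 0 (0, 0, cId C X)),
     cAdd = (\<lambda>(X, i) (Y, j). orb_add C S X Y (i - j)),
     cZero = (\<lambda>(X, i) (Y, j). orb_zero C S X Y (i - j)),
     cSmul = (\<lambda>(X, i) (Y, j). orb_smul C S X Y (i - j)) \<rparr>"

definition shift_functor :: "('o \<times> int, 'x, 'o \<times> int, 'x) lfun" where
  "shift_functor = \<lparr>fob = (\<lambda>(X, i). (X, i - 1)), fmor = (\<lambda>_ _ f. f)\<rparr>"

definition H_functor :: "('o, 'm, 'k) lcat \<Rightarrow> ('o, 'm, 'o, 'm) lfun
    \<Rightarrow> ('o, 'm, 'o \<times> int, (nat \<times> nat \<times> 'm) set) lfun" where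
  "H_functor C S = \<lparr>fob = (\<lambda>X. (X, 0)), fmor = (\<lambda>X Y f. orb_cls C S X Y 0 (0, 0, f))\<rparr>"

end

theory Submission
  imports Defs
begin

lemma hm_zero: assumes "hom_module C X Y" shows "cZero C X Y \<in> cHom C X Y"
  using assms unfolding hom_module_def Let_def by meson

lemma hm_addc: assumes "hom_module C X Y" shows "f \<in> cHom C X Y \<Longrightarrow> g \<in> cHom C X Y \<Longrightarrow> cAdd C X Y f g \<in> cHom C X Y"
  using assms unfolding hom_module_def Let_def by meson

lemma hm_smulc: assumes "hom_module C X Y" shows "f \<in> cHom C X Y \<Longrightarrow> cSmul C X Y a f \<in> cHom C X Y"
  using assms unfolding hom_module_def Let_def by meson

lemma hm_assoc: assumes "hom_module C X Y" shows "f \<in> cHom C X Y \<Longrightarrow> g \<in> cHom C X Y \<Longrightarrow> h \<in> cHom C X Y \<Longrightarrow> cAdd C X Y (cAdd C X Y f g) h = cAdd C X Y f (cAdd C X Y g h)"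
  using assms unfolding hom_module_def Let_def by meson

lemma hm_comm: assumes "hom_module C X Y" shows "f \<in> cHom C X Y \<Longrightarrow> g \<in> cHom C X Y \<Longrightarrow> cAdd C X Y f g = cAdd C X Y g f"
  using assms unfolding hom_module_def Let_def by meson

lemma hm_zl: assumes "hom_module C X Y" shows "f \<in> cHom C X Y \<Longrightarrow> cAdd C X Y (cZero C X Y) f = f"
  using assms unfolding hom_module_def Let_def by meson

lemma hm_neg: assumes "hom_module C X Y" shows "f \<in> cHom C X Y \<Longrightarrow> \<exists>g\<in>cHom C X Y. cAdd C X Y f g = cZero C X Y"
  using assms unfolding hom_module_def Let_def by meson

lemma hm_sadd: assumes "hom_module C X Y" shows "f \<in> cHom C X Y \<Longrightarrow> g \<in> cHom C X Y \<Longrightarrow> cSmul C X Y a (cAdd C X Y f g) = cAdd C X Y (cSmul C X Y a f) (cSmul C X Y a g)"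
  using assms unfolding hom_module_def Let_def by meson

lemma hm_adds: assumes "hom_module C X Y" shows "f \<in> cHom C X Y \<Longrightarrow> cSmul C X Y (a + b) f = cAdd C X Y (cSmul C X Y a f) (cSmul C X Y b f)"
  using assms unfolding hom_module_def Let_def by meson

lemma hm_muls: assumes "hom_module C X Y" shows "f \<in> cHom C X Y \<Longrightarrow> cSmul C X Y (a * b) f = cSmul C X Y a (cSmul C X Y b f)"
  using assms unfolding hom_module_def Let_def by meson

lemma hm_ones: assumes "hom_module C X Y" shows "f \<in> cHom C X Y \<Longrightarrow> cSmul C X Y 1 f = f"
  using assms unfolding hom_module_def Let_def by meson

lemma hm_idem_zero:
  assumes "hom_module C X Y" "x \<in> cHom C X Y" "cAdd C X Y x x = x"
  shows "x = cZero C X Y"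
proof -
  
  obtain g where g: "g \<in> cHom C X Y" "cAdd C X Y x g = cZero C X Y" using hm_neg[OF assms(1,2)] by blast
  have "cAdd C X Y (cAdd C X Y x x) g = cZero C X Y" using assms(3) g by simp
  then have "cAdd C X Y x (cZero C X Y) = cZero C X Y" using hm_assoc[OF assms(1,2,2) g(1)] g by simp
  then show ?thesis using hm_comm[OF assms(1,2) hm_zero[OF assms(1)]] hm_zl[OF assms(1,2)] by simp
qed

context
  fixes C :: "('o, 'm, 'k::comm_ring_1) lcat"
  assumes KC: "klin_cat C"
begin

lemma KCu: "klin_cat C" using KC .
lemmas KCs = KC[unfolded klin_cat_def]

lemma kc_hm: "X \<in> cOb C \<Longrightarrow> Y \<in> cOb C \<Longrightarrow> hom_module C X Y"
  using KCs[THEN conjunct1] by simp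

lemma kc_id: "X \<in> cOb C \<Longrightarrow> cId C X \<in> cHom C X X"
  using KCs[THEN conjunct2, THEN conjunct1] by simp

lemma kc_comp: "X \<in> cOb C \<Longrightarrow> Y \<in> cOb C \<Longrightarrow> Z \<in> cOb C \<Longrightarrow> f \<in> cHom C X Y \<Longrightarrow> g \<in> cHom C Y Z
   \<Longrightarrow> cComp C X Y Z g f \<in> cHom C X Z"
  using KCs[THEN conjunct2, THEN conjunct2, THEN conjunct1] by simp

lemma kc_assoc: "W \<in> cOb C \<Longrightarrow> X \<in> cOb C \<Longrightarrow> Y \<in> cOb C \<Longrightarrow> Z \<in> cOb C \<Longrightarrow>
   f \<in> cHom C W X \<Longrightarrow> g \<in> cHom C X Y \<Longrightarrow> h \<in> cHom C Y Z \<Longrightarrow>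
   cComp C W Y Z h (cComp C W X Y g f) = cComp C W X Z (cComp C X Y Z h g) f"
  using KCs[THEN conjunct2, THEN conjunct2, THEN conjunct2, THEN conjunct1] by simp

lemma kc_idl: "X \<in> cOb C \<Longrightarrow> Y \<in> cOb C \<Longrightarrow> f \<in> cHom C X Y \<Longrightarrow> cComp C X Y Y (cId C Y) f = f"
  using KCs[THEN conjunct2, THEN conjunct2, THEN conjunct2, THEN conjunct2, THEN conjunct1] by simp

lemma kc_idr: "X \<in> cOb C \<Longrightarrow> Y \<in> cOb C \<Longrightarrow> f \<in> cHom C X Y \<Longrightarrow> cComp C X X Y f (cId C X) = f"
  using KCs[THEN conjunct2, THEN conjunct2, THEN conjunct2, THEN conjunct2, THEN conjunct1] by simp

lemmas KCbil = KCs[THEN conjunct2, THEN conjunct2, THEN conjunct2, THEN conjunct2, THEN conjunct2]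

lemma kc_bilin:
  assumes "X \<in> cOb C" "Y \<in> cOb C" "Z \<in> cOb C" "f \<in> cHom C X Y" "f' \<in> cHom C X Y"
    "g \<in> cHom C Y Z" "g' \<in> cHom C Y Z"
  shows "cComp C X Y Z (cAdd C Y Z g g') f = cAdd C X Z (cComp C X Y Z g f) (cComp C X Y Z g' f)"
    "cComp C X Y Z g (cAdd C X Y f f') = cAdd C X Z (cComp C X Y Z g f) (cComp C X Y Z g f')"
    "cComp C X Y Z (cSmul C Y Z a g) f = cSmul C X Z a (cComp C X Y Z g f)"
    "cComp C X Y Z g (cSmul C X Y a f) = cSmul C X Z a (cComp C X Y Z g f)"
  using KCbil assms by simp_all

end

context
  fixes C :: "('o, 'm, 'k::comm_ring_1) lcat" and D :: "('p, 'n, 'k) lcat" and F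
  assumes KF: "klin_functor C D F"
begin

lemma kf_C: "klin_cat C" and kf_D: "klin_cat D"
  using KF unfolding klin_functor_def by simp_all

lemma kf_ob: "X \<in> cOb C \<Longrightarrow> fob F X \<in> cOb D"
  using KF unfolding klin_functor_def by simp

lemma kf_hom: "X \<in> cOb C \<Longrightarrow> Y \<in> cOb C \<Longrightarrow> f \<in> cHom C X Y \<Longrightarrow> fmor F X Y f \<in> cHom D (fob F X) (fob F Y)"
  using KF unfolding klin_functor_def by simp

lemma kf_id: "X \<in> cOb C \<Longrightarrow> fmor F X X (cId C X) = cId D (fob F X)"
  using KF unfolding klin_functor_def by simp

lemma kf_comp: "X \<in> cOb C \<Longrightarrow> Y \<in> cOb C \<Longrightarrow> Z \<in> cOb C \<Longrightarrow> f \<in> cHom C X Y \<Longrightarrow> g \<in> cHom C Y Z \<Longrightarrow>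
   fmor F X Z (cComp C X Y Z g f) = cComp D (fob F X) (fob F Y) (fob F Z) (fmor F Y Z g) (fmor F X Y f)"
  using KF unfolding klin_functor_def by simp

lemma kf_add: "X \<in> cOb C \<Longrightarrow> Y \<in> cOb C \<Longrightarrow> f \<in> cHom C X Y \<Longrightarrow> g \<in> cHom C X Y \<Longrightarrow>
   fmor F X Y (cAdd C X Y f g) = cAdd D (fob F X) (fob F Y) (fmor F X Y f) (fmor F X Y g)"
  using KF unfolding klin_functor_def by simp

lemma kf_smul: "X \<in> cOb C \<Longrightarrow> Y \<in> cOb C \<Longrightarrow> f \<in> cHom C X Y \<Longrightarrow>
   fmor F X Y (cSmul C X Y a f) = cSmul D (fob F X) (fob F Y) a (fmor F X Y f)"
  using KF unfolding klin_functor_def by simp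

lemma kf_zero: "X \<in> cOb C \<Longrightarrow> Y \<in> cOb C \<Longrightarrow> fmor F X Y (cZero C X Y) = cZero D (fob F X) (fob F Y)"
proof -
  assume X: "X \<in> cOb C" and Y: "Y \<in> cOb C"
  have hC: "hom_module C X Y" using kc_hm[OF kf_C X Y] .
  have hD: "hom_module D (fob F X) (fob F Y)" using kc_hm[OF kf_D kf_ob[OF X] kf_ob[OF Y]] .
  have z: "cZero C X Y \<in> cHom C X Y" using hm_zero[OF hC] .
  have zz: "cAdd C X Y (cZero C X Y) (cZero C X Y) = cZero C X Y" using hm_zl[OF hC z] .
  have "cAdd D (fob F X) (fob F Y) (fmor F X Y (cZero C X Y)) (fmor F X Y (cZero C X Y)) = fmor F X Y (cZero C X Y)"
    using kf_add[OF X Y z z] zz by simp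
  then show ?thesis using hm_idem_zero[OF hD kf_hom[OF X Y z]] by simp
qed

end


lemma fid_simps[simp]: "fob fid X = X" "fmor fid X Y f = f" by (simp_all add: fid_def)
lemma fun_comp_simps[simp]: "fob (fun_comp G F) X = fob G (fob F X)"
  "fmor (fun_comp G F) X Y f = fmor G (fob F X) (fob F Y) (fmor F X Y f)"
  by (simp_all add: fun_comp_def)

lemma iso_hom: "is_iso C X Y u \<Longrightarrow> u \<in> cHom C X Y" by (simp add: is_iso_def)

lemma iso_inv:
  assumes "is_iso C X Y u"
  obtains v where "is_iso C Y X v" "cComp C X Y X v u = cId C X" "cComp C Y X Y u v = cId C Y"
  using assms unfolding is_iso_def by blast

context
  fixes C :: "('o, 'm, 'k::comm_ring_1) lcat"
  assumes KC: "klin_cat C"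
begin


lemma iso_cancel_left:
  assumes X: "X \<in> cOb C" and Y: "Y \<in> cOb C" and Z: "Z \<in> cOb C" and u: "is_iso C Y Z u"
    and f: "f \<in> cHom C X Y" and g: "g \<in> cHom C X Y"
    and eq: "cComp C X Y Z u f = cComp C X Y Z u g"
  shows "f = g"
proof -
  obtain v where v: "v \<in> cHom C Z Y" "cComp C Y Z Y v u = cId C Y" using u unfolding is_iso_def by blast
  have uh: "u \<in> cHom C Y Z" using iso_hom[OF u] .
  have "cComp C X Z Y v (cComp C X Y Z u f) = cComp C X Z Y v (cComp C X Y Z u g)" using eq by simp
  then have "cComp C X Y Y (cComp C Y Z Y v u) f = cComp C X Y Y (cComp C Y Z Y v u) g"
    using kc_assoc[OF KC X Y Z Y f uh v(1)] kc_assoc[OF KC X Y Z Y g uh v(1)] by simp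
  then show ?thesis using v(2) kc_idl[OF KC X Y f] kc_idl[OF KC X Y g] by simp
qed

lemma iso_cancel_right:
  assumes X: "X \<in> cOb C" and Y: "Y \<in> cOb C" and Z: "Z \<in> cOb C" and u: "is_iso C X Y u"
    and f: "f \<in> cHom C Y Z" and g: "g \<in> cHom C Y Z"
    and eq: "cComp C X Y Z f u = cComp C X Y Z g u"
  shows "f = g"
proof -
  obtain v where v: "v \<in> cHom C Y X" "cComp C Y X Y u v = cId C Y" using u unfolding is_iso_def by blast
  have uh: "u \<in> cHom C X Y" using iso_hom[OF u] .
  have "cComp C Y X Z (cComp C X Y Z f u) v = cComp C Y X Z (cComp C X Y Z g u) v" using eq by simp
  then have "cComp C Y Y Z f (cComp C Y X Y u v) = cComp C Y Y Z g (cComp C Y X Y u v)"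
    using kc_assoc[OF KC Y X Y Z v(1) uh f] kc_assoc[OF KC Y X Y Z v(1) uh g] by simp
  then show ?thesis using v(2) kc_idr[OF KC Y Z f] kc_idr[OF KC Y Z g] by simp
qed


lemma id_iso: "X \<in> cOb C \<Longrightarrow> is_iso C X X (cId C X)"
  unfolding is_iso_def using kc_id[OF KC] kc_idl[OF KC] by (metis)

lemma iso_comp:
  assumes X: "X \<in> cOb C" and Y: "Y \<in> cOb C" and Z: "Z \<in> cOb C"
    and u: "is_iso C X Y u" and w: "is_iso C Y Z w"
  shows "is_iso C X Z (cComp C X Y Z w u)"
proof -
  obtain u' where u': "is_iso C Y X u'" "cComp C X Y X u' u = cId C X" "cComp C Y X Y u u' = cId C Y"
    using iso_inv[OF u] .
  obtain w' where w': "is_iso C Z Y w'" "cComp C Y Z Y w' w = cId C Y" "cComp C Z Y Z w w' = cId C Z"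
    using iso_inv[OF w] .
  have uh: "u \<in> cHom C X Y" and wh: "w \<in> cHom C Y Z" and u'h: "u' \<in> cHom C Y X" and w'h: "w' \<in> cHom C Z Y"
    using iso_hom[OF u] iso_hom[OF w] iso_hom[OF u'(1)] iso_hom[OF w'(1)] by auto
  have c1: "cComp C X Z X (cComp C Z Y X u' w') (cComp C X Y Z w u) = cId C X"
  proof -
    have "cComp C X Z X (cComp C Z Y X u' w') (cComp C X Y Z w u)
        = cComp C X Y X u' (cComp C X Z Y w' (cComp C X Y Z w u))"
      using kc_assoc[OF KC X Z Y X kc_comp[OF KC X Y Z uh wh] w'h u'h] by simp
    also have "\<dots> = cComp C X Y X u' (cComp C X Y Y (cComp C Y Z Y w' w) u)"
      using kc_assoc[OF KC X Y Z Y uh wh w'h] by simp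
    also have "\<dots> = cId C X" using w'(2) kc_idl[OF KC X Y uh] u'(2) by simp
    finally show ?thesis .
  qed
  have c2: "cComp C Z X Z (cComp C X Y Z w u) (cComp C Z Y X u' w') = cId C Z"
  proof -
    have "cComp C Z X Z (cComp C X Y Z w u) (cComp C Z Y X u' w')
        = cComp C Z Y Z w (cComp C Z X Y u (cComp C Z Y X u' w'))"
      using kc_assoc[OF KC Z X Y Z kc_comp[OF KC Z Y X w'h u'h] uh wh] by simp
    also have "\<dots> = cComp C Z Y Z w (cComp C Z Y Y (cComp C Y X Y u u') w')"
      using kc_assoc[OF KC Z Y X Y w'h u'h uh] by simp
    also have "\<dots> = cId C Z" using u'(3) kc_idl[OF KC Z Y w'h] w'(3) by simp
    finally show ?thesis .
  qed
  show ?thesis unfolding is_iso_def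
    using kc_comp[OF KC X Y Z uh wh] kc_comp[OF KC Z Y X w'h u'h] c1 c2 by blast
qed

end

definition faithful :: "('o, 'm, 'k::comm_ring_1) lcat \<Rightarrow> ('o, 'm, 'p, 'n) lfun \<Rightarrow> bool" where
  "faithful C F \<longleftrightarrow> (\<forall>X\<in>cOb C. \<forall>Y\<in>cOb C. \<forall>f\<in>cHom C X Y. \<forall>g\<in>cHom C X Y.
      fmor F X Y f = fmor F X Y g \<longrightarrow> f = g)"

definition full :: "('o, 'm, 'k::comm_ring_1) lcat \<Rightarrow> ('p, 'n, 'k) lcat \<Rightarrow> ('o, 'm, 'p, 'n) lfun \<Rightarrow> bool" where
  "full C D F \<longleftrightarrow> (\<forall>X\<in>cOb C. \<forall>Y\<in>cOb C. \<forall>h\<in>cHom D (fob F X) (fob F Y). \<exists>f\<in>cHom C X Y. fmor F X Y f = h)"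

definition esssurj :: "('o, 'm, 'k::comm_ring_1) lcat \<Rightarrow> ('p, 'n, 'k) lcat \<Rightarrow> ('o, 'm, 'p, 'n) lfun \<Rightarrow> bool" where
  "esssurj C D F \<longleftrightarrow> (\<forall>Y\<in>cOb D. \<exists>X\<in>cOb C. \<exists>u. is_iso D Y (fob F X) u)"

lemma nat_iso_parts:
  assumes "nat_iso C D F G \<eta>"
  shows "klin_functor C D F" "klin_functor C D G"
    "X \<in> cOb C \<Longrightarrow> is_iso D (fob F X) (fob G X) (\<eta> X)"
    "X \<in> cOb C \<Longrightarrow> Y \<in> cOb C \<Longrightarrow> f \<in> cHom C X Y \<Longrightarrow>
       cComp D (fob F X) (fob G X) (fob G Y) (fmor G X Y f) (\<eta> X)
     = cComp D (fob F X) (fob F Y) (fob G Y) (\<eta> Y) (fmor F X Y f)"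
  using assms unfolding nat_iso_def by blast+

lemma equiv_props:
  fixes C :: "('o, 'm, 'k::comm_ring_1) lcat" and D :: "('p, 'n, 'k) lcat"
  assumes E: "klin_equivalence C D F"
  shows "faithful C F \<and> full C D F \<and> esssurj C D F"
proof -
  have KF: "klin_functor C D F" using E unfolding klin_equivalence_def by blast
  obtain G \<eta> \<epsilon> where KG: "klin_functor D C G" and ETA: "nat_iso C C fid (fun_comp G F) \<eta>"
    and EPS: "nat_iso D D (fun_comp F G) fid \<epsilon>"
    using E unfolding klin_equivalence_def by blast
  have KC: "klin_cat C" and KD: "klin_cat D" using kf_C[OF KF] kf_D[OF KF] .
  have eta_iso: "\<And>X. X \<in> cOb C \<Longrightarrow> is_iso C X (fob G (fob F X)) (\<eta> X)"
    using nat_iso_parts(3)[OF ETA] by simp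
  have eta_nat: "\<And>X Y f. X \<in> cOb C \<Longrightarrow> Y \<in> cOb C \<Longrightarrow> f \<in> cHom C X Y \<Longrightarrow>
     cComp C X (fob G (fob F X)) (fob G (fob F Y)) (fmor G (fob F X) (fob F Y) (fmor F X Y f)) (\<eta> X)
     = cComp C X Y (fob G (fob F Y)) (\<eta> Y) f"
    using nat_iso_parts(4)[OF ETA] by simp
  have eps_iso: "\<And>Y. Y \<in> cOb D \<Longrightarrow> is_iso D (fob F (fob G Y)) Y (\<epsilon> Y)"
    using nat_iso_parts(3)[OF EPS] by simp
  have eps_nat: "\<And>X Y c. X \<in> cOb D \<Longrightarrow> Y \<in> cOb D \<Longrightarrow> c \<in> cHom D X Y \<Longrightarrow>
     cComp D (fob F (fob G X)) X Y c (\<epsilon> X)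
     = cComp D (fob F (fob G X)) (fob F (fob G Y)) Y (\<epsilon> Y) (fmor F (fob G X) (fob G Y) (fmor G X Y c))"
    using nat_iso_parts(4)[OF EPS] by simp
  have FO: "\<And>X. X \<in> cOb C \<Longrightarrow> fob F X \<in> cOb D" using kf_ob[OF KF] .
  have GO: "\<And>X. X \<in> cOb D \<Longrightarrow> fob G X \<in> cOb C" using kf_ob[OF KG] .
  have faithF: "faithful C F"
    unfolding faithful_def
  proof (intro ballI impI)
    fix X Y f g assume X: "X \<in> cOb C" and Y: "Y \<in> cOb C" and f: "f \<in> cHom C X Y" and g: "g \<in> cHom C X Y"
      and eq: "fmor F X Y f = fmor F X Y g"
    have "cComp C X Y (fob G (fob F Y)) (\<eta> Y) f = cComp C X Y (fob G (fob F Y)) (\<eta> Y) g"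
      using eta_nat[OF X Y f] eta_nat[OF X Y g] eq by simp
    then show "f = g" using iso_cancel_left[OF KC X Y GO[OF FO[OF Y]] eta_iso[OF Y] f g] by blast
  qed
  have faithG: "faithful D G"
    unfolding faithful_def
  proof (intro ballI impI)
    fix X Y f g assume X: "X \<in> cOb D" and Y: "Y \<in> cOb D" and f: "f \<in> cHom D X Y" and g: "g \<in> cHom D X Y"
      and eq: "fmor G X Y f = fmor G X Y g"
    have "cComp D (fob F (fob G X)) X Y f (\<epsilon> X) = cComp D (fob F (fob G X)) X Y g (\<epsilon> X)"
      using eps_nat[OF X Y f] eps_nat[OF X Y g] eq by simp
    then show "f = g" using iso_cancel_right[OF KD FO[OF GO[OF X]] X Y eps_iso[OF X] f g] by blast
  qed
  have fullF: "full C D F"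
    unfolding full_def
  proof (intro ballI)
    fix X Y h assume X: "X \<in> cOb C" and Y: "Y \<in> cOb C" and h: "h \<in> cHom D (fob F X) (fob F Y)"
    obtain w where w: "is_iso C (fob G (fob F Y)) Y w" "cComp C Y (fob G (fob F Y)) Y w (\<eta> Y) = cId C Y"
        "cComp C (fob G (fob F Y)) Y (fob G (fob F Y)) (\<eta> Y) w = cId C (fob G (fob F Y))"
      using iso_inv[OF eta_iso[OF Y]] by blast
    define GX where "GX = fob G (fob F X)"
    define GY where "GY = fob G (fob F Y)"
    have GXo: "GX \<in> cOb C" and GYo: "GY \<in> cOb C" unfolding GX_def GY_def using GO FO X Y by auto
    have etaX: "\<eta> X \<in> cHom C X GX" using iso_hom[OF eta_iso[OF X]] unfolding GX_def .
    have etaY: "\<eta> Y \<in> cHom C Y GY" using iso_hom[OF eta_iso[OF Y]] unfolding GY_def .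
    have wh: "w \<in> cHom C GY Y" using iso_hom[OF w(1)] unfolding GY_def .
    have Gh: "fmor G (fob F X) (fob F Y) h \<in> cHom C GX GY"
      using kf_hom[OF KG FO[OF X] FO[OF Y] h] unfolding GX_def GY_def .
    define f where "f = cComp C X GY Y w (cComp C X GX GY (fmor G (fob F X) (fob F Y) h) (\<eta> X))"
    have fh: "f \<in> cHom C X Y" unfolding f_def
      using kc_comp[OF KC X GYo Y kc_comp[OF KC X GXo GYo etaX Gh] wh] .
    have "cComp C X GX GY (fmor G (fob F X) (fob F Y) (fmor F X Y f)) (\<eta> X) = cComp C X Y GY (\<eta> Y) f"
      using eta_nat[OF X Y fh] unfolding GX_def GY_def .
    also have "\<dots> = cComp C X GY GY (cComp C GY Y GY (\<eta> Y) w) (cComp C X GX GY (fmor G (fob F X) (fob F Y) h) (\<eta> X))"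
      unfolding f_def using kc_assoc[OF KC X GYo Y GYo kc_comp[OF KC X GXo GYo etaX Gh] wh etaY] .
    also have "\<dots> = cComp C X GX GY (fmor G (fob F X) (fob F Y) h) (\<eta> X)"
      using w(3) kc_idl[OF KC X GYo kc_comp[OF KC X GXo GYo etaX Gh]] unfolding GY_def by simp
    finally have "cComp C X GX GY (fmor G (fob F X) (fob F Y) (fmor F X Y f)) (\<eta> X)
        = cComp C X GX GY (fmor G (fob F X) (fob F Y) h) (\<eta> X)" .
    then have "fmor G (fob F X) (fob F Y) (fmor F X Y f) = fmor G (fob F X) (fob F Y) h"
      using iso_cancel_right[OF KC X GXo GYo _ _ Gh] eta_iso[OF X] kf_hom[OF KG FO[OF X] FO[OF Y] kf_hom[OF KF X Y fh]]
      unfolding GX_def GY_def by blast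
    then have "fmor F X Y f = h" using faithG kf_hom[OF KF X Y fh] h FO[OF X] FO[OF Y]
      unfolding faithful_def by blast
    then show "\<exists>f\<in>cHom C X Y. fmor F X Y f = h" using fh by blast
  qed
  have esF: "esssurj C D F"
    unfolding esssurj_def
  proof
    fix Y assume Y: "Y \<in> cOb D"
    obtain v where "is_iso D Y (fob F (fob G Y)) v" using iso_inv[OF eps_iso[OF Y]] by blast
    then show "\<exists>X\<in>cOb C. \<exists>u. is_iso D Y (fob F X) u" using GO[OF Y] by blast
  qed
  show ?thesis using faithF fullF esF by blast
qed


lemma Spow_0[simp]: "Spow S 0 X = X" by (simp add: Spow_def)
lemma Spow_Suc: "Spow S (Suc k) X = fob S (Spow S k X)" by (simp add: Spow_def)
lemma Spow_add[simp]: "Spow S k (Spow S n X) = Spow S (k + n) X" by (simp add: Spow_def funpow_add)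

lemma Smpow_Smpow: "Smpow S k (Spow S k' A) (Spow S k' B) (Smpow S k' A B f) = Smpow S (k + k') A B f"
proof (induction k)
  case 0 then show ?case by simp
next
  case (Suc k) then show ?case by (simp del: Spow_add add: Spow_add[symmetric])
qed

lemma Smpow_1: "Smpow S 1 A B f = fmor S A B f" by simp

locale orbS =
  fixes C :: "('o, 'm, 'k::comm_ring_1) lcat" and S :: "('o, 'm, 'o, 'm) lfun"
  assumes KF: "klin_functor C C S" and FA: "faithful C S" and FU: "full C C S"
begin

lemma KC: "klin_cat C" using kf_C[OF KF] .

lemma spow_ob: "X \<in> cOb C \<Longrightarrow> Spow S k X \<in> cOb C"
  by (induction k) (auto simp: Spow_Suc kf_ob[OF KF])

lemma Smpow_hom: "A \<in> cOb C \<Longrightarrow> B \<in> cOb C \<Longrightarrow> f \<in> cHom C A B \<Longrightarrow>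
   Smpow S k A B f \<in> cHom C (Spow S k A) (Spow S k B)"
  by (induction k) (auto simp: Spow_Suc intro!: kf_hom[OF KF] spow_ob)

lemma Smpow_comp: "A \<in> cOb C \<Longrightarrow> B \<in> cOb C \<Longrightarrow> Z \<in> cOb C \<Longrightarrow> f \<in> cHom C A B \<Longrightarrow> g \<in> cHom C B Z \<Longrightarrow>
   Smpow S k A Z (cComp C A B Z g f) = cComp C (Spow S k A) (Spow S k B) (Spow S k Z) (Smpow S k B Z g) (Smpow S k A B f)"
  by (induction k) (auto simp: Spow_Suc kf_comp[OF KF] spow_ob Smpow_hom)

lemma Smpow_id: "A \<in> cOb C \<Longrightarrow> Smpow S k A A (cId C A) = cId C (Spow S k A)"
  by (induction k) (auto simp: Spow_Suc kf_id[OF KF] spow_ob)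

lemma Smpow_add: "A \<in> cOb C \<Longrightarrow> B \<in> cOb C \<Longrightarrow> f \<in> cHom C A B \<Longrightarrow> g \<in> cHom C A B \<Longrightarrow>
   Smpow S k A B (cAdd C A B f g) = cAdd C (Spow S k A) (Spow S k B) (Smpow S k A B f) (Smpow S k A B g)"
  by (induction k) (auto simp: Spow_Suc kf_add[OF KF] spow_ob Smpow_hom)

lemma Smpow_smul: "A \<in> cOb C \<Longrightarrow> B \<in> cOb C \<Longrightarrow> f \<in> cHom C A B \<Longrightarrow>
   Smpow S k A B (cSmul C A B a f) = cSmul C (Spow S k A) (Spow S k B) a (Smpow S k A B f)"
  by (induction k) (auto simp: Spow_Suc kf_smul[OF KF] spow_ob Smpow_hom)

lemma Smpow_zero: "A \<in> cOb C \<Longrightarrow> B \<in> cOb C \<Longrightarrow>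
   Smpow S k A B (cZero C A B) = cZero C (Spow S k A) (Spow S k B)"
  by (induction k) (auto simp: Spow_Suc kf_zero[OF KF] spow_ob)

lemma Smpow_inj: "A \<in> cOb C \<Longrightarrow> B \<in> cOb C \<Longrightarrow> f \<in> cHom C A B \<Longrightarrow> g \<in> cHom C A B \<Longrightarrow>
   Smpow S k A B f = Smpow S k A B g \<Longrightarrow> f = g"
proof (induction k)
  case 0 then show ?case by simp
next
  case (Suc k)
  have "Smpow S k A B f = Smpow S k A B g"
    using FA Suc.prems Smpow_hom[of A B f k] Smpow_hom[of A B g k] spow_ob[of A k] spow_ob[of B k]
    unfolding faithful_def by simp
  then show ?case using Suc by blast
qed

lemma Smpow_surj: "A \<in> cOb C \<Longrightarrow> B \<in> cOb C \<Longrightarrow> h \<in> cHom C (Spow S k A) (Spow S k B) \<Longrightarrow>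
   \<exists>f\<in>cHom C A B. Smpow S k A B f = h"
proof (induction k arbitrary: h)
  case 0 then show ?case by simp
next
  case (Suc k)
  obtain h' where h': "h' \<in> cHom C (Spow S k A) (Spow S k B)" "fmor S (Spow S k A) (Spow S k B) h' = h"
    using FU Suc.prems spow_ob[of A k] spow_ob[of B k] unfolding full_def Spow_Suc by blast
  obtain f where "f \<in> cHom C A B" "Smpow S k A B f = h'" using Suc.IH[OF Suc.prems(1,2) h'(1)] by blast
  then show ?case using h'(2) by auto
qed

end


definition lv :: "int \<Rightarrow> nat \<Rightarrow> nat" where "lv r m = nat (int m + r)"
definition atl :: "int \<Rightarrow> (nat \<times> nat \<times> 'm) set \<Rightarrow> nat \<Rightarrow> 'm" where
  "atl r c m = (THE g. (m, lv r m, g) \<in> c)"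

lemma Smpow_split: "Smpow S (a + b) (Spow S n X) (Spow S p Y) f
   = Smpow S a (Spow S (b + n) X) (Spow S (b + p) Y) (Smpow S b (Spow S n X) (Spow S p Y) f)"
  using Smpow_Smpow[of S a b "Spow S n X" "Spow S p Y" f] by simp

lemma reps_iff: "(n, p, f) \<in> orb_reps C S X Y r \<longleftrightarrow> int p - int n = r \<and> f \<in> cHom C (Spow S n X) (Spow S p Y)"
  by (simp add: orb_reps_def)

lemma rel_iff0: "((n, p, f), (n', p', f')) \<in> orb_rel C S X Y r \<longleftrightarrow>
   (n, p, f) \<in> orb_reps C S X Y r \<and> (n', p', f') \<in> orb_reps C S X Y r \<and>
   (\<exists>k k'. n + k = n' + k' \<and>
         Smpow S k (Spow S n X) (Spow S p Y) f = Smpow S k' (Spow S n' X) (Spow S p' Y) f')"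
  unfolding orb_rel_def by simp

lemma equiv_rel: "equiv (orb_reps C S X Y r) (orb_rel C S X Y r)"
proof (rule equivI)
  show "orb_rel C S X Y r \<subseteq> orb_reps C S X Y r \<times> orb_reps C S X Y r"
    unfolding orb_rel_def by auto
  show "refl_on (orb_reps C S X Y r) (orb_rel C S X Y r)"
    unfolding refl_on_def by (auto simp: rel_iff0 intro: exI[of _ 0])
  show "sym (orb_rel C S X Y r)"
    unfolding sym_def by (auto simp: rel_iff0) (metis)
  show "trans (orb_rel C S X Y r)"
  proof (rule transI)
    fix a b c assume ab: "(a, b) \<in> orb_rel C S X Y r" and bc: "(b, c) \<in> orb_rel C S X Y r"
    obtain n p f where a: "a = (n, p, f)" by (cases a) auto
    obtain n' p' f' where b: "b = (n', p', f')" by (cases b) auto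
    obtain n'' p'' f'' where c: "c = (n'', p'', f'')" by (cases c) auto
    from ab obtain k1 k1' where ra: "(n, p, f) \<in> orb_reps C S X Y r" "(n', p', f') \<in> orb_reps C S X Y r"
      and e1: "n + k1 = n' + k1'"
      "Smpow S k1 (Spow S n X) (Spow S p Y) f = Smpow S k1' (Spow S n' X) (Spow S p' Y) f'"
      unfolding a b rel_iff0 by blast
    from bc obtain k2 k2' where rc: "(n'', p'', f'') \<in> orb_reps C S X Y r"
      and e2: "n' + k2 = n'' + k2'"
      "Smpow S k2 (Spow S n' X) (Spow S p' Y) f' = Smpow S k2' (Spow S n'' X) (Spow S p'' Y) f''"
      unfolding b c rel_iff0 by blast
    have p1: "k1 + p = k1' + p'" using ra e1(1) unfolding reps_iff by linarith
    have p2: "k2 + p' = k2' + p''" using ra rc e2(1) unfolding reps_iff by linarith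
    have n1: "k1 + n = k1' + n'" using e1(1) by simp
    have n2: "k2 + n' = k2' + n''" using e2(1) by simp
    have "Smpow S (k2 + k1) (Spow S n X) (Spow S p Y) f
        = Smpow S k2 (Spow S (k1 + n) X) (Spow S (k1 + p) Y) (Smpow S k1 (Spow S n X) (Spow S p Y) f)"
      by (rule Smpow_split)
    also have "\<dots> = Smpow S k2 (Spow S (k1' + n') X) (Spow S (k1' + p') Y) (Smpow S k1' (Spow S n' X) (Spow S p' Y) f')"
      using e1(2) n1 p1 by simp
    also have "\<dots> = Smpow S (k2 + k1') (Spow S n' X) (Spow S p' Y) f'"
      by (rule Smpow_split[symmetric])
    also have "\<dots> = Smpow S (k1' + k2) (Spow S n' X) (Spow S p' Y) f'" by (simp add: add.commute)
    also have "\<dots> = Smpow S k1' (Spow S (k2 + n') X) (Spow S (k2 + p') Y) (Smpow S k2 (Spow S n' X) (Spow S p' Y) f')"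
      by (rule Smpow_split)
    also have "\<dots> = Smpow S k1' (Spow S (k2' + n'') X) (Spow S (k2' + p'') Y) (Smpow S k2' (Spow S n'' X) (Spow S p'' Y) f'')"
      using e2(2) n2 p2 by simp
    also have "\<dots> = Smpow S (k1' + k2') (Spow S n'' X) (Spow S p'' Y) f''"
      by (rule Smpow_split[symmetric])
    finally have "Smpow S (k1 + k2) (Spow S n X) (Spow S p Y) f = Smpow S (k1' + k2') (Spow S n'' X) (Spow S p'' Y) f''"
      by (simp add: add.commute)
    moreover have "n + (k1 + k2) = n'' + (k1' + k2')" using e1(1) e2(1) by simp
    ultimately show "(a, c) \<in> orb_rel C S X Y r" unfolding a c rel_iff0 using ra rc by blast
  qed
qed

lemma lv_simp: "0 \<le> int m + r \<Longrightarrow> int (lv r m) = int m + r" by (simp add: lv_def)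

context orbS
begin

lemma rel_le:
  assumes X: "X \<in> cOb C" and Y: "Y \<in> cOb C" and R: "((n, p, f), (n', p', f')) \<in> orb_rel C S X Y r"
    and le: "n \<le> n'"
  shows "f' = Smpow S (n' - n) (Spow S n X) (Spow S p Y) f"
proof -
  from R obtain k k' where ra: "(n, p, f) \<in> orb_reps C S X Y r" "(n', p', f') \<in> orb_reps C S X Y r"
    and e: "n + k = n' + k'"
      "Smpow S k (Spow S n X) (Spow S p Y) f = Smpow S k' (Spow S n' X) (Spow S p' Y) f'"
    unfolding rel_iff0 by blast
  define d where "d = n' - n"
  have k: "k = k' + d" using e(1) le unfolding d_def by simp
  have nn: "d + n = n'" using le unfolding d_def by simp
  have pp: "d + p = p'" using ra e(1) le unfolding reps_iff d_def by linarith
  have fh: "f \<in> cHom C (Spow S n X) (Spow S p Y)" and f'h: "f' \<in> cHom C (Spow S n' X) (Spow S p' Y)"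
    using ra unfolding reps_iff by auto
  have "Smpow S k' (Spow S n' X) (Spow S p' Y) (Smpow S d (Spow S n X) (Spow S p Y) f)
      = Smpow S k' (Spow S n' X) (Spow S p' Y) f'"
    using e(2) Smpow_split[of S k' d n X p Y f] k nn pp by simp
  moreover have "Smpow S d (Spow S n X) (Spow S p Y) f \<in> cHom C (Spow S n' X) (Spow S p' Y)"
    using Smpow_hom[OF spow_ob[OF X] spow_ob[OF Y] fh, of d] nn pp by simp
  ultimately show ?thesis using Smpow_inj[OF spow_ob[OF X] spow_ob[OF Y] _ f'h] unfolding d_def by metis
qed

lemma rel_iff:
  assumes X: "X \<in> cOb C" and Y: "Y \<in> cOb C"
  shows "((n, p, f), (n', p', f')) \<in> orb_rel C S X Y r \<longleftrightarrow>
   (n, p, f) \<in> orb_reps C S X Y r \<and> (n', p', f') \<in> orb_reps C S X Y r \<and>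
   (n \<le> n' \<longrightarrow> f' = Smpow S (n' - n) (Spow S n X) (Spow S p Y) f) \<and>
   (n' \<le> n \<longrightarrow> f = Smpow S (n - n') (Spow S n' X) (Spow S p' Y) f')"
proof
  assume R: "((n, p, f), (n', p', f')) \<in> orb_rel C S X Y r"
  then have R': "((n', p', f'), (n, p, f)) \<in> orb_rel C S X Y r"
    using equiv_rel[of C S X Y r] unfolding equiv_def sym_def by blast
  show "(n, p, f) \<in> orb_reps C S X Y r \<and> (n', p', f') \<in> orb_reps C S X Y r \<and>
   (n \<le> n' \<longrightarrow> f' = Smpow S (n' - n) (Spow S n X) (Spow S p Y) f) \<and>
   (n' \<le> n \<longrightarrow> f = Smpow S (n - n') (Spow S n' X) (Spow S p' Y) f')"
    using R rel_le[OF X Y R] rel_le[OF X Y R'] unfolding rel_iff0 by blast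
next
  assume H: "(n, p, f) \<in> orb_reps C S X Y r \<and> (n', p', f') \<in> orb_reps C S X Y r \<and>
   (n \<le> n' \<longrightarrow> f' = Smpow S (n' - n) (Spow S n X) (Spow S p Y) f) \<and>
   (n' \<le> n \<longrightarrow> f = Smpow S (n - n') (Spow S n' X) (Spow S p' Y) f')"
  show "((n, p, f), (n', p', f')) \<in> orb_rel C S X Y r"
  proof (cases "n \<le> n'")
    case True
    then show ?thesis using H unfolding rel_iff0
      by (intro conjI exI[of _ "n' - n"] exI[of _ 0]) auto
  next
    case False
    then show ?thesis using H unfolding rel_iff0
      by (intro conjI exI[of _ 0] exI[of _ "n - n'"]) auto
  qed
qed

end


context orbS
begin

context
  fixes X Y :: 'o and r :: int
  assumes X: "X \<in> cOb C" and Y: "Y \<in> cOb C"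
begin

lemma cls_of_mem:
  assumes c: "c \<in> orb_hom C S X Y r" and a: "a \<in> c"
  shows "a \<in> orb_reps C S X Y r" "c = orb_cls C S X Y r a"
proof -
  obtain x where x: "c = orb_rel C S X Y r `` {x}" "x \<in> orb_reps C S X Y r"
    using c unfolding orb_hom_def by (rule quotientE)
  have xa: "(x, a) \<in> orb_rel C S X Y r" using a x by simp
  note H = equiv_class_eq_iff[OF equiv_rel, THEN iffD1, OF xa]
  show "a \<in> orb_reps C S X Y r" using H by simp
  show "c = orb_cls C S X Y r a" using H x(1) unfolding orb_cls_def by simp
qed

lemma cls_in: "a \<in> orb_reps C S X Y r \<Longrightarrow> orb_cls C S X Y r a \<in> orb_hom C S X Y r"
  unfolding orb_cls_def orb_hom_def by (rule quotientI)

lemma self_in_cls: "a \<in> orb_reps C S X Y r \<Longrightarrow> a \<in> orb_cls C S X Y r a"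
  unfolding orb_cls_def by (rule equiv_class_self[OF equiv_rel])

lemma level_ex1:
  assumes c: "c \<in> orb_hom C S X Y r" and m: "0 \<le> int m + r"
  shows "\<exists>!g. (m, lv r m, g) \<in> c"
proof -
  obtain x where x: "c = orb_rel C S X Y r `` {x}" "x \<in> orb_reps C S X Y r"
    using c unfolding orb_hom_def by (rule quotientE)
  obtain n0 p0 f0 where x0: "x = (n0, p0, f0)" by (cases x) auto
  have r0: "int p0 - int n0 = r" and f0: "f0 \<in> cHom C (Spow S n0 X) (Spow S p0 Y)"
    using x(2) unfolding x0 reps_iff by auto
  have lvm: "int (lv r m) = int m + r" using lv_simp[OF m] .
  have mem: "\<And>g. (m, lv r m, g) \<in> c \<longleftrightarrow> g \<in> cHom C (Spow S m X) (Spow S (lv r m) Y) \<and>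
      (n0 \<le> m \<longrightarrow> g = Smpow S (m - n0) (Spow S n0 X) (Spow S p0 Y) f0) \<and>
      (m \<le> n0 \<longrightarrow> f0 = Smpow S (n0 - m) (Spow S m X) (Spow S (lv r m) Y) g)"
    using x(2) unfolding x x0 by (simp add: rel_iff[OF X Y] reps_iff lvm)
  show ?thesis
  proof (cases "n0 \<le> m")
    case True
    define g where "g = Smpow S (m - n0) (Spow S n0 X) (Spow S p0 Y) f0"
    have e1: "m - n0 + n0 = m" using True by simp
    have "int (m - n0 + p0) = int (lv r m)" using True r0 lvm by (simp add: of_nat_diff)
    then have e2: "m - n0 + p0 = lv r m" by (simp only: of_nat_eq_iff)
    have h0: "g \<in> cHom C (Spow S (m-n0) (Spow S n0 X)) (Spow S (m-n0) (Spow S p0 Y))"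
      unfolding g_def by (rule Smpow_hom[OF spow_ob[OF X] spow_ob[OF Y] f0])
    have o1: "Spow S (m-n0) (Spow S n0 X) = Spow S m X" using e1 by (simp only: Spow_add)
    have o2: "Spow S (m-n0) (Spow S p0 Y) = Spow S (lv r m) Y" using e2 by (simp only: Spow_add)
    have gh: "g \<in> cHom C (Spow S m X) (Spow S (lv r m) Y)"
      using h0 unfolding o1 o2 .
    have "(m, lv r m, g) \<in> c" unfolding mem using gh True unfolding g_def by auto
    moreover have "\<And>g'. (m, lv r m, g') \<in> c \<Longrightarrow> g' = g" unfolding mem g_def using True by auto
    ultimately show ?thesis by blast
  next
    case False
    define d where "d = n0 - m"
    have e1: "Spow S d (Spow S m X) = Spow S n0 X" using False unfolding d_def by (simp only: Spow_add, simp)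
    have "int (d + lv r m) = int p0" using False r0 lvm unfolding d_def by (simp add: of_nat_diff)
    then have e2: "Spow S d (Spow S (lv r m) Y) = Spow S p0 Y" by (simp only: Spow_add of_nat_eq_iff)
    have f0': "f0 \<in> cHom C (Spow S d (Spow S m X)) (Spow S d (Spow S (lv r m) Y))"
      unfolding e1 e2 by (rule f0)
    obtain g where g: "g \<in> cHom C (Spow S m X) (Spow S (lv r m) Y)" "Smpow S d (Spow S m X) (Spow S (lv r m) Y) g = f0"
      using Smpow_surj[OF spow_ob[OF X] spow_ob[OF Y] f0'] by (rule bexE)
    have "(m, lv r m, g) \<in> c" unfolding mem using g False unfolding d_def by auto
    moreover have "\<And>g'. (m, lv r m, g') \<in> c \<Longrightarrow> g' = g"
    proof -
      fix g' assume "(m, lv r m, g') \<in> c"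
      then have "g' \<in> cHom C (Spow S m X) (Spow S (lv r m) Y)" "Smpow S d (Spow S m X) (Spow S (lv r m) Y) g' = f0"
        unfolding mem d_def using False by auto
      then show "g' = g" using Smpow_inj[OF spow_ob[OF X] spow_ob[OF Y] _ g(1)] g(2) by metis
    qed
    ultimately show ?thesis by blast
  qed
qed

lemma at_mem: "c \<in> orb_hom C S X Y r \<Longrightarrow> 0 \<le> int m + r \<Longrightarrow> (m, lv r m, atl r c m) \<in> c"
  unfolding atl_def by (rule theI', rule level_ex1)

lemma at_uniq:
  assumes c: "c \<in> orb_hom C S X Y r" and mem: "(m, q, g) \<in> c"
  shows "0 \<le> int m + r" "q = lv r m" "g = atl r c m"
proof -
  have "(m, q, g) \<in> orb_reps C S X Y r" using cls_of_mem(1)[OF c mem] .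
  then have qr: "int q - int m = r" unfolding reps_iff by simp
  then show "0 \<le> int m + r" by simp
  show q: "q = lv r m" using qr unfolding lv_def by simp
  show "g = atl r c m" unfolding atl_def
    by (rule the1_equality[symmetric], rule level_ex1[OF c], use qr in simp, use mem q in simp)
qed

lemma at_hom: "c \<in> orb_hom C S X Y r \<Longrightarrow> 0 \<le> int m + r \<Longrightarrow>
   atl r c m \<in> cHom C (Spow S m X) (Spow S (lv r m) Y)"
  using cls_of_mem(1)[OF _ at_mem] unfolding reps_iff by blast

lemma at_lift:
  assumes c: "c \<in> orb_hom C S X Y r" and m: "0 \<le> int m + r" and le: "m \<le> M"
  shows "atl r c M = Smpow S (M - m) (Spow S m X) (Spow S (lv r m) Y) (atl r c m)"
proof -
  have M: "0 \<le> int M + r" using m le by simp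
  have c1: "c = orb_cls C S X Y r (m, lv r m, atl r c m)" using cls_of_mem(2)[OF c at_mem[OF c m]] .
  have "(M, lv r M, atl r c M) \<in> c" using at_mem[OF c M] .
  then have "((m, lv r m, atl r c m), (M, lv r M, atl r c M)) \<in> orb_rel C S X Y r"
    using c1 unfolding orb_cls_def by (metis Image_singleton_iff)
  then show ?thesis using le unfolding rel_iff[OF X Y] by blast
qed

lemma cls_ext:
  assumes c: "c \<in> orb_hom C S X Y r" and d: "d \<in> orb_hom C S X Y r" and m: "0 \<le> int m + r"
    and eq: "atl r c m = atl r d m"
  shows "c = d"
  using cls_of_mem(2)[OF c at_mem[OF c m]] cls_of_mem(2)[OF d at_mem[OF d m]] eq by simp

lemma at_cls:
  assumes a: "(n, p, f) \<in> orb_reps C S X Y r"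
  shows "atl r (orb_cls C S X Y r (n, p, f)) n = f" "0 \<le> int n + r" "p = lv r n"
  using at_uniq[OF cls_in[OF a] self_in_cls[OF a]] by auto

lemma some_rep:
  assumes c: "c \<in> orb_hom C S X Y r"
  obtains n where "(SOME x. x \<in> c) = (n, lv r n, atl r c n)" "0 \<le> int n + r"
proof -
  have "c \<noteq> {}" by (rule in_quotient_imp_non_empty[OF equiv_rel c[unfolded orb_hom_def]])
  then have mem: "(SOME x. x \<in> c) \<in> c" by (simp add: some_in_eq)
  obtain n q g where e: "(SOME x. x \<in> c) = (n, q, g)" by (cases "SOME x. x \<in> c") auto
  have m: "(n, q, g) \<in> c" using mem unfolding e .
  show ?thesis
    by (rule that[of n], unfold e, use at_uniq[OF c m] in simp_all)
qed

end

end


definition evt :: "(nat \<Rightarrow> bool) \<Rightarrow> bool" where "evt P \<longleftrightarrow> (\<exists>N. \<forall>M\<ge>N. P M)"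

lemma evtI: "(\<And>M. N \<le> M \<Longrightarrow> P M) \<Longrightarrow> evt P" unfolding evt_def by blast
lemma evt_conj: "evt P \<Longrightarrow> evt Q \<Longrightarrow> evt (\<lambda>M. P M \<and> Q M)"
  unfolding evt_def by (metis max.bounded_iff)
lemma evt_mono: "evt P \<Longrightarrow> (\<And>M. P M \<Longrightarrow> Q M) \<Longrightarrow> evt Q" unfolding evt_def by blast
lemma evt_ge: "evt (\<lambda>M. N \<le> M)" unfolding evt_def by blast
lemma evt_ex: "evt P \<Longrightarrow> \<exists>M. N \<le> M \<and> P M" unfolding evt_def by (metis max.cobounded1 max.cobounded2)
lemma evt_lv:
  assumes "evt P" shows "evt (\<lambda>M. P (lv r M))"
proof -
  obtain N where N: "\<And>M. N \<le> M \<Longrightarrow> P M" using assms unfolding evt_def by blast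
  show ?thesis
  proof (rule evtI[of "N + nat (- r)"])
    fix M assume M: "N + nat (- r) \<le> M"
    have a: "int (nat (- r)) \<ge> - r" by simp
    have "int N \<le> int M + r" using M a by linarith
    then have "N \<le> lv r M" unfolding lv_def by (simp add: le_nat_iff)
    then show "P (lv r M)" by (rule N)
  qed
qed

lemma lv_shift: "0 \<le> int m + r \<Longrightarrow> m \<le> M \<Longrightarrow> M - m + lv r m = lv r M"
  unfolding lv_def by simp
lemma lv_ge: "0 \<le> int m + r \<Longrightarrow> m \<le> M \<Longrightarrow> lv r m \<le> lv r M"
  unfolding lv_def by simp
lemma lv_lv: "0 \<le> int m + a \<Longrightarrow> lv b (lv a m) = lv (a + b) m"
  unfolding lv_def by (simp add: add.assoc)
lemma lv_nonneg: "0 \<le> int m + r \<Longrightarrow> 0 \<le> int (lv r m) + s \<longleftrightarrow> 0 \<le> int m + (r + s)"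
  unfolding lv_def by (simp add: add.assoc)

context orbS
begin

context
  fixes X Y :: 'o and r :: int
  assumes X: "X \<in> cOb C" and Y: "Y \<in> cOb C"
begin

lemma evt_lvl: "evt (\<lambda>M. 0 \<le> int M + r)"
  by (rule evtI[of "nat (- r)"]) (simp add: nat_le_iff)

lemma at_hom_evt: "c \<in> orb_hom C S X Y r \<Longrightarrow> evt (\<lambda>M. atl r c M \<in> cHom C (Spow S M X) (Spow S (lv r M) Y))"
proof -
  assume c: "c \<in> orb_hom C S X Y r"
  show ?thesis by (rule evt_mono[OF evt_lvl], rule at_hom[OF X Y c])
qed

lemma ext_evt:
  assumes c: "c \<in> orb_hom C S X Y r" and d: "d \<in> orb_hom C S X Y r"
    and e: "evt (\<lambda>M. atl r c M = atl r d M)"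
  shows "c = d"
proof -
  obtain M where "nat (- r) \<le> M" "atl r c M = atl r d M" using evt_ex[OF e] by blast
  then show ?thesis using cls_ext[OF X Y c d, of M] by simp
qed

lemma at_lift_gen:
  assumes c: "c \<in> orb_hom C S X Y r" and m: "0 \<le> int m + r" and le: "m \<le> M" and k: "k = M - m"
  shows "Smpow S k (Spow S m X) (Spow S (lv r m) Y) (atl r c m) = atl r c M"
  using at_lift[OF X Y c m le] k by simp

lemma objX: "m \<le> M \<Longrightarrow> k = M - m \<Longrightarrow> Spow S k (Spow S m X) = Spow S M X" by simp

lemma objY: "0 \<le> int m + r \<Longrightarrow> m \<le> M \<Longrightarrow> k = M - m \<Longrightarrow> Spow S k (Spow S (lv r m) Y) = Spow S (lv r M) Y"
  using lv_shift by simp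

lemma cls_lift:
  assumes a: "(N, lv r N, h) \<in> orb_reps C S X Y r" and le: "N \<le> M"
  shows "atl r (orb_cls C S X Y r (N, lv r N, h)) M = Smpow S (M - N) (Spow S N X) (Spow S (lv r N) Y) h"
  using at_lift[OF X Y cls_in[OF X Y a] at_cls(2)[OF X Y a] le] at_cls(1)[OF X Y a] by simp

lemma add_props:
  assumes c: "c \<in> orb_hom C S X Y r" and d: "d \<in> orb_hom C S X Y r"
  shows "orb_add C S X Y r c d \<in> orb_hom C S X Y r"
    "evt (\<lambda>M. atl r (orb_add C S X Y r c d) M = cAdd C (Spow S M X) (Spow S (lv r M) Y) (atl r c M) (atl r d M))"
proof -
  obtain n where n: "(SOME x. x \<in> c) = (n, lv r n, atl r c n)" "0 \<le> int n + r" using some_rep[OF X Y c] by blast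
  obtain n' where n': "(SOME x. x \<in> d) = (n', lv r n', atl r d n')" "0 \<le> int n' + r" using some_rep[OF X Y d] by blast
  define N where "N = max n n'"
  have N: "0 \<le> int N + r" "n \<le> N" "n' \<le> N" using n(2) unfolding N_def by auto
  define h where "h = cAdd C (Spow S N X) (Spow S (lv r N) Y) (atl r c N) (atl r d N)"
  have lc: "Smpow S (N - n) (Spow S n X) (Spow S (lv r n) Y) (atl r c n) = atl r c N"
    by (rule at_lift_gen[OF c n(2) N(2) refl])
  have ld: "Smpow S (N - n') (Spow S n' X) (Spow S (lv r n') Y) (atl r d n') = atl r d N"
    by (rule at_lift_gen[OF d n'(2) N(3) refl])
  have lvN: "lv r n + (N - n) = lv r N" using lv_shift[OF n(2) N(2)] by simp
  have eq: "orb_add C S X Y r c d = orb_cls C S X Y r (N, lv r N, h)"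
    unfolding orb_add_def n(1) n'(1) Let_def prod.case N_def[symmetric] lvN lc ld h_def ..
  have hh: "h \<in> cHom C (Spow S N X) (Spow S (lv r N) Y)"
    unfolding h_def by (rule hm_addc[OF kc_hm[OF KC spow_ob[OF X] spow_ob[OF Y]] at_hom[OF X Y c N(1)] at_hom[OF X Y d N(1)]])
  have hr: "(N, lv r N, h) \<in> orb_reps C S X Y r" unfolding reps_iff using hh lv_simp[OF N(1)] by simp
  show "orb_add C S X Y r c d \<in> orb_hom C S X Y r" unfolding eq by (rule cls_in[OF X Y hr])
  show "evt (\<lambda>M. atl r (orb_add C S X Y r c d) M = cAdd C (Spow S M X) (Spow S (lv r M) Y) (atl r c M) (atl r d M))"
  proof (rule evtI[of N])
    fix M assume M: "N \<le> M"
    have "atl r (orb_add C S X Y r c d) M = Smpow S (M - N) (Spow S N X) (Spow S (lv r N) Y) h"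
      unfolding eq by (rule cls_lift[OF hr M])
    also have "\<dots> = cAdd C (Spow S (M - N) (Spow S N X)) (Spow S (M - N) (Spow S (lv r N) Y))
        (Smpow S (M - N) (Spow S N X) (Spow S (lv r N) Y) (atl r c N))
        (Smpow S (M - N) (Spow S N X) (Spow S (lv r N) Y) (atl r d N))"
      unfolding h_def by (rule Smpow_add[OF spow_ob[OF X] spow_ob[OF Y] at_hom[OF X Y c N(1)] at_hom[OF X Y d N(1)]])
    also have "\<dots> = cAdd C (Spow S M X) (Spow S (lv r M) Y) (atl r c M) (atl r d M)"
      by (simp only: objX[OF M refl] objY[OF N(1) M refl] at_lift_gen[OF c N(1) M refl] at_lift_gen[OF d N(1) M refl])
    finally show "atl r (orb_add C S X Y r c d) M = cAdd C (Spow S M X) (Spow S (lv r M) Y) (atl r c M) (atl r d M)" .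
  qed
qed

lemma smul_props:
  assumes c: "c \<in> orb_hom C S X Y r"
  shows "orb_smul C S X Y r a c \<in> orb_hom C S X Y r"
    "evt (\<lambda>M. atl r (orb_smul C S X Y r a c) M = cSmul C (Spow S M X) (Spow S (lv r M) Y) a (atl r c M))"
proof -
  obtain N where n: "(SOME x. x \<in> c) = (N, lv r N, atl r c N)" and N: "0 \<le> int N + r" using some_rep[OF X Y c] by blast
  define h where "h = cSmul C (Spow S N X) (Spow S (lv r N) Y) a (atl r c N)"
  have eq: "orb_smul C S X Y r a c = orb_cls C S X Y r (N, lv r N, h)"
    unfolding orb_smul_def n prod.case h_def ..
  have hh: "h \<in> cHom C (Spow S N X) (Spow S (lv r N) Y)"
    unfolding h_def by (rule hm_smulc[OF kc_hm[OF KC spow_ob[OF X] spow_ob[OF Y]] at_hom[OF X Y c N]])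
  have hr: "(N, lv r N, h) \<in> orb_reps C S X Y r" unfolding reps_iff using hh lv_simp[OF N] by simp
  show "orb_smul C S X Y r a c \<in> orb_hom C S X Y r" unfolding eq by (rule cls_in[OF X Y hr])
  show "evt (\<lambda>M. atl r (orb_smul C S X Y r a c) M = cSmul C (Spow S M X) (Spow S (lv r M) Y) a (atl r c M))"
  proof (rule evtI[of N])
    fix M assume M: "N \<le> M"
    have "atl r (orb_smul C S X Y r a c) M = Smpow S (M - N) (Spow S N X) (Spow S (lv r N) Y) h"
      unfolding eq by (rule cls_lift[OF hr M])
    also have "\<dots> = cSmul C (Spow S (M - N) (Spow S N X)) (Spow S (M - N) (Spow S (lv r N) Y)) a
        (Smpow S (M - N) (Spow S N X) (Spow S (lv r N) Y) (atl r c N))"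
      unfolding h_def by (rule Smpow_smul[OF spow_ob[OF X] spow_ob[OF Y] at_hom[OF X Y c N]])
    also have "\<dots> = cSmul C (Spow S M X) (Spow S (lv r M) Y) a (atl r c M)"
      by (simp only: objX[OF M refl] objY[OF N M refl] at_lift_gen[OF c N M refl])
    finally show "atl r (orb_smul C S X Y r a c) M = cSmul C (Spow S M X) (Spow S (lv r M) Y) a (atl r c M)" .
  qed
qed

lemma zero_props:
  shows "orb_zero C S X Y r \<in> orb_hom C S X Y r"
    "evt (\<lambda>M. atl r (orb_zero C S X Y r) M = cZero C (Spow S M X) (Spow S (lv r M) Y))"
proof -
  define N where "N = nat (- r)"
  have N: "0 \<le> int N + r" unfolding N_def by simp
  have nr: "nat r = lv r N" unfolding N_def lv_def by simp
  define h where "h = cZero C (Spow S N X) (Spow S (lv r N) Y)"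
  have eq: "orb_zero C S X Y r = orb_cls C S X Y r (N, lv r N, h)"
    unfolding orb_zero_def h_def N_def[symmetric] nr ..
  have hh: "h \<in> cHom C (Spow S N X) (Spow S (lv r N) Y)"
    unfolding h_def by (rule hm_zero[OF kc_hm[OF KC spow_ob[OF X] spow_ob[OF Y]]])
  have hr: "(N, lv r N, h) \<in> orb_reps C S X Y r" unfolding reps_iff using hh lv_simp[OF N] by simp
  show "orb_zero C S X Y r \<in> orb_hom C S X Y r" unfolding eq by (rule cls_in[OF X Y hr])
  show "evt (\<lambda>M. atl r (orb_zero C S X Y r) M = cZero C (Spow S M X) (Spow S (lv r M) Y))"
  proof (rule evtI[of N])
    fix M assume M: "N \<le> M"
    have "atl r (orb_zero C S X Y r) M = Smpow S (M - N) (Spow S N X) (Spow S (lv r N) Y) h"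
      unfolding eq by (rule cls_lift[OF hr M])
    also have "\<dots> = cZero C (Spow S (M - N) (Spow S N X)) (Spow S (M - N) (Spow S (lv r N) Y))"
      unfolding h_def by (rule Smpow_zero[OF spow_ob[OF X] spow_ob[OF Y]])
    also have "\<dots> = cZero C (Spow S M X) (Spow S (lv r M) Y)"
      by (simp only: objX[OF M refl] objY[OF N M refl])
    finally show "atl r (orb_zero C S X Y r) M = cZero C (Spow S M X) (Spow S (lv r M) Y)" .
  qed
qed

end

lemma id_props:
  assumes X: "X \<in> cOb C"
  shows "orb_cls C S X X 0 (0, 0, cId C X) \<in> orb_hom C S X X 0"
    "evt (\<lambda>M. atl 0 (orb_cls C S X X 0 (0, 0, cId C X)) M = cId C (Spow S M X))"
proof -
  have l0: "lv 0 m = m" for m unfolding lv_def by simp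
  have hr: "(0, lv 0 0, cId C X) \<in> orb_reps C S X X 0" unfolding reps_iff l0 using kc_id[OF KC X] by simp
  show "orb_cls C S X X 0 (0, 0, cId C X) \<in> orb_hom C S X X 0" using cls_in[OF X X hr] by (simp add: l0)
  show "evt (\<lambda>M. atl 0 (orb_cls C S X X 0 (0, 0, cId C X)) M = cId C (Spow S M X))"
  proof (rule evtI[of 0])
    fix M :: nat assume M: "0 \<le> M"
    have "atl 0 (orb_cls C S X X 0 (0, lv 0 0, cId C X)) M = Smpow S (M - 0) (Spow S 0 X) (Spow S (lv 0 0) X) (cId C X)"
      by (rule cls_lift[OF X X hr M])
    also have "\<dots> = cId C (Spow S M X)" using Smpow_id[OF X, of M] by (simp add: l0)
    finally show "atl 0 (orb_cls C S X X 0 (0, 0, cId C X)) M = cId C (Spow S M X)" by (simp add: l0)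
  qed
qed

end


context orbS
begin

lemma comp_props:
  assumes X: "X \<in> cOb C" and Y: "Y \<in> cOb C" and Z: "Z \<in> cOb C"
    and g: "g \<in> orb_hom C S Y Z b" and f: "f \<in> orb_hom C S X Y a" and r: "r = a + b"
  shows "orb_comp C S X Y Z b a g f \<in> orb_hom C S X Z r"
    "evt (\<lambda>M. atl r (orb_comp C S X Y Z b a g f) M =
        cComp C (Spow S M X) (Spow S (lv a M) Y) (Spow S (lv b (lv a M)) Z) (atl b g (lv a M)) (atl a f M))"
proof -
  obtain n1 where n1: "(SOME x. x \<in> g) = (n1, lv b n1, atl b g n1)" "0 \<le> int n1 + b"
    using some_rep[OF Y Z g] by blast
  obtain n2 where n2: "(SOME x. x \<in> f) = (n2, lv a n2, atl a f n2)" "0 \<le> int n2 + a"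
    using some_rep[OF X Y f] by blast
  define N where "N = max n1 (lv a n2)"
  define s where "s = n2 + (N - lv a n2)"
  have N1: "n1 \<le> N" and N2: "lv a n2 \<le> N" unfolding N_def by auto
  have Nb: "0 \<le> int N + b" using n1(2) N1 by simp
  have ia: "int (lv a n2) = int n2 + a" using lv_simp[OF n2(2)] .
  have iS: "int s = int n2 + int N - int (lv a n2)" unfolding s_def using N2 by (simp add: of_nat_diff)
  have sa: "int s + a = int N" using iS ia by simp
  have s_a: "0 \<le> int s + a" using sa by simp
  have lvs: "lv a s = N" unfolding lv_def using sa by simp
  have n2s: "n2 \<le> s" unfolding s_def by simp
  have kf: "N - lv a n2 = s - n2" unfolding s_def by simp
  have lvr: "lv r s = lv b N" using lv_lv[OF s_a, of b] lvs r by simp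
  have t: "lv b n1 + (N - n1) = lv b N" using lv_shift[OF n1(2) N1] by simp
  have gN: "Smpow S (N - n1) (Spow S n1 Y) (Spow S (lv b n1) Z) (atl b g n1) = atl b g N"
    by (rule at_lift_gen[OF Y Z g n1(2) N1 refl])
  have fs: "Smpow S (N - lv a n2) (Spow S n2 X) (Spow S (lv a n2) Y) (atl a f n2) = atl a f s"
    by (rule at_lift_gen[OF X Y f n2(2) n2s kf])
  define h where "h = cComp C (Spow S s X) (Spow S N Y) (Spow S (lv b N) Z) (atl b g N) (atl a f s)"
  have eq: "orb_comp C S X Y Z b a g f = orb_cls C S X Z r (s, lv r s, h)"
    unfolding orb_comp_def n1(1) n2(1) prod.case Let_def N_def[symmetric] s_def[symmetric] t gN fs lvr h_def r lvr[unfolded r] ..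
  have fsh: "atl a f s \<in> cHom C (Spow S s X) (Spow S N Y)" using at_hom[OF X Y f s_a] unfolding lvs .
  have gNh: "atl b g N \<in> cHom C (Spow S N Y) (Spow S (lv b N) Z)" using at_hom[OF Y Z g Nb] .
  have hh: "h \<in> cHom C (Spow S s X) (Spow S (lv r s) Z)" unfolding lvr h_def
    by (rule kc_comp[OF KC spow_ob[OF X] spow_ob[OF Y] spow_ob[OF Z] fsh gNh])
  have sr: "0 \<le> int s + r" using sa Nb r by simp
  have hr: "(s, lv r s, h) \<in> orb_reps C S X Z r" unfolding reps_iff using hh lv_simp[OF sr] by simp
  show "orb_comp C S X Y Z b a g f \<in> orb_hom C S X Z r" unfolding eq by (rule cls_in[OF X Z hr])
  show "evt (\<lambda>M. atl r (orb_comp C S X Y Z b a g f) M =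
        cComp C (Spow S M X) (Spow S (lv a M) Y) (Spow S (lv b (lv a M)) Z) (atl b g (lv a M)) (atl a f M))"
  proof (rule evtI[of s])
    fix M assume Ms: "s \<le> M"
    have la: "M - s + N = lv a M" using lv_shift[OF s_a Ms] unfolding lvs .
    have NL: "N \<le> lv a M" and kk: "M - s = lv a M - N" using la by auto
    have "atl r (orb_comp C S X Y Z b a g f) M = Smpow S (M - s) (Spow S s X) (Spow S (lv r s) Z) h"
      unfolding eq by (rule cls_lift[OF X Z hr Ms])
    also have "\<dots> = Smpow S (M - s) (Spow S s X) (Spow S (lv b N) Z) h" unfolding lvr ..
    also have "\<dots> = cComp C (Spow S (M - s) (Spow S s X)) (Spow S (M - s) (Spow S N Y)) (Spow S (M - s) (Spow S (lv b N) Z))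
        (Smpow S (M - s) (Spow S N Y) (Spow S (lv b N) Z) (atl b g N)) (Smpow S (M - s) (Spow S s X) (Spow S N Y) (atl a f s))"
      unfolding h_def by (rule Smpow_comp[OF spow_ob[OF X] spow_ob[OF Y] spow_ob[OF Z] fsh gNh])
    also have "\<dots> = cComp C (Spow S M X) (Spow S (lv a M) Y) (Spow S (lv b (lv a M)) Z) (atl b g (lv a M)) (atl a f M)"
      by (simp only: objX[OF X Y Ms refl] objY[OF X Y s_a Ms refl, unfolded lvs] objY[OF Y Z Nb NL kk]
          at_lift_gen[OF Y Z g Nb NL kk] at_lift_gen[OF X Y f s_a Ms refl, unfolded lvs])
    finally show "atl r (orb_comp C S X Y Z b a g f) M =
        cComp C (Spow S M X) (Spow S (lv a M) Y) (Spow S (lv b (lv a M)) Z) (atl b g (lv a M)) (atl a f M)" .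
  qed
qed

end


lemma lv0[simp]: "lv 0 m = m" unfolding lv_def by simp

context orbS
begin

context
  fixes X Y :: 'o and r :: int
  assumes X: "X \<in> cOb C" and Y: "Y \<in> cOb C"
begin

lemmas HM = kc_hm[OF KC spow_ob[OF X] spow_ob[OF Y]]

lemma orb_add_assoc:
  assumes c: "c \<in> orb_hom C S X Y r" and d: "d \<in> orb_hom C S X Y r" and e: "e \<in> orb_hom C S X Y r"
  shows "orb_add C S X Y r (orb_add C S X Y r c d) e = orb_add C S X Y r c (orb_add C S X Y r d e)"
proof -
  note cd = add_props[OF X Y c d] and de = add_props[OF X Y d e]
  note cde1 = add_props[OF X Y cd(1) e] and cde2 = add_props[OF X Y c de(1)]
  show ?thesis
    apply (rule ext_evt[OF X Y cde1(1) cde2(1)])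
    apply (rule evt_mono[OF evt_conj[OF evt_conj[OF evt_conj[OF cd(2) de(2)] evt_conj[OF cde1(2) cde2(2)]]
                  evt_conj[OF evt_conj[OF at_hom_evt[OF X Y c] at_hom_evt[OF X Y d]] at_hom_evt[OF X Y e]]]])
    apply (elim conjE)
    apply (simp add: hm_assoc[OF HM])
    done
qed


lemma orb_add_comm:
  assumes c: "c \<in> orb_hom C S X Y r" and d: "d \<in> orb_hom C S X Y r"
  shows "orb_add C S X Y r c d = orb_add C S X Y r d c"
proof -
  note cd = add_props[OF X Y c d] and dc = add_props[OF X Y d c]
  show ?thesis
    apply (rule ext_evt[OF X Y cd(1) dc(1)])
    apply (rule evt_mono[OF evt_conj[OF evt_conj[OF cd(2) dc(2)] evt_conj[OF at_hom_evt[OF X Y c] at_hom_evt[OF X Y d]]]])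
    apply (elim conjE)
    apply (simp add: hm_comm[OF HM])
    done
qed

lemma orb_zero_add:
  assumes c: "c \<in> orb_hom C S X Y r"
  shows "orb_add C S X Y r (orb_zero C S X Y r) c = c"
proof -
  note z = zero_props[OF X Y, of r] note zc = add_props[OF X Y z(1) c]
  show ?thesis
    apply (rule ext_evt[OF X Y zc(1) c])
    apply (rule evt_mono[OF evt_conj[OF evt_conj[OF zc(2) z(2)] at_hom_evt[OF X Y c]]])
    apply (elim conjE)
    apply (simp add: hm_zl[OF HM])
    done
qed

lemma orb_smul_add:
  assumes c: "c \<in> orb_hom C S X Y r" and d: "d \<in> orb_hom C S X Y r"
  shows "orb_smul C S X Y r a (orb_add C S X Y r c d) = orb_add C S X Y r (orb_smul C S X Y r a c) (orb_smul C S X Y r a d)"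
proof -
  note cd = add_props[OF X Y c d] and sc = smul_props[OF X Y c, of a] and sd = smul_props[OF X Y d, of a]
  note s1 = smul_props[OF X Y cd(1), of a] and s2 = add_props[OF X Y sc(1) sd(1)]
  show ?thesis
    apply (rule ext_evt[OF X Y s1(1) s2(1)])
    apply (rule evt_mono[OF evt_conj[OF evt_conj[OF evt_conj[OF cd(2) sc(2)] evt_conj[OF sd(2) s1(2)]]
       evt_conj[OF s2(2) evt_conj[OF at_hom_evt[OF X Y c] at_hom_evt[OF X Y d]]]]])
    apply (elim conjE)
    apply (simp add: hm_sadd[OF HM])
    done
qed

lemma orb_add_smul:
  assumes c: "c \<in> orb_hom C S X Y r"
  shows "orb_smul C S X Y r (a + b) c = orb_add C S X Y r (orb_smul C S X Y r a c) (orb_smul C S X Y r b c)"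
proof -
  note sc = smul_props[OF X Y c, of a] and sd = smul_props[OF X Y c, of b]
  note s1 = smul_props[OF X Y c, of "a + b"] and s2 = add_props[OF X Y sc(1) sd(1)]
  show ?thesis
    apply (rule ext_evt[OF X Y s1(1) s2(1)])
    apply (rule evt_mono[OF evt_conj[OF evt_conj[OF evt_conj[OF sc(2) sd(2)] s1(2)]
       evt_conj[OF s2(2) at_hom_evt[OF X Y c]]]])
    apply (elim conjE)
    apply (simp add: hm_adds[OF HM])
    done
qed

lemma orb_mul_smul:
  assumes c: "c \<in> orb_hom C S X Y r"
  shows "orb_smul C S X Y r (a * b) c = orb_smul C S X Y r a (orb_smul C S X Y r b c)"
proof -
  note sc = smul_props[OF X Y c, of b]
  note s1 = smul_props[OF X Y c, of "a * b"] and s2 = smul_props[OF X Y sc(1), of a]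
  show ?thesis
    apply (rule ext_evt[OF X Y s1(1) s2(1)])
    apply (rule evt_mono[OF evt_conj[OF evt_conj[OF sc(2) s1(2)] evt_conj[OF s2(2) at_hom_evt[OF X Y c]]]])
    apply (elim conjE)
    apply (simp add: hm_muls[OF HM])
    done
qed

lemma orb_one_smul:
  assumes c: "c \<in> orb_hom C S X Y r"
  shows "orb_smul C S X Y r 1 c = c"
proof -
  note s1 = smul_props[OF X Y c, of 1]
  show ?thesis
    apply (rule ext_evt[OF X Y s1(1) c])
    apply (rule evt_mono[OF evt_conj[OF s1(2) at_hom_evt[OF X Y c]]])
    apply (elim conjE)
    apply (simp add: hm_ones[OF HM])
    done
qed

lemma orb_neg:
  assumes c: "c \<in> orb_hom C S X Y r"
  shows "\<exists>d\<in>orb_hom C S X Y r. orb_add C S X Y r c d = orb_zero C S X Y r"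
proof -
  define m0 where "m0 = nat (- r)"
  have m0: "0 \<le> int m0 + r" unfolding m0_def by simp
  have cm: "atl r c m0 \<in> cHom C (Spow S m0 X) (Spow S (lv r m0) Y)" by (rule at_hom[OF X Y c m0])
  obtain g0 where g0: "g0 \<in> cHom C (Spow S m0 X) (Spow S (lv r m0) Y)"
      "cAdd C (Spow S m0 X) (Spow S (lv r m0) Y) (atl r c m0) g0 = cZero C (Spow S m0 X) (Spow S (lv r m0) Y)"
    using hm_neg[OF HM cm] by (rule bexE)
  define d where "d = orb_cls C S X Y r (m0, lv r m0, g0)"
  have hr: "(m0, lv r m0, g0) \<in> orb_reps C S X Y r" unfolding reps_iff using g0(1) lv_simp[OF m0] by simp
  have d: "d \<in> orb_hom C S X Y r" unfolding d_def by (rule cls_in[OF X Y hr])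
  note cd = add_props[OF X Y c d] and z = zero_props[OF X Y, of r]
  have "orb_add C S X Y r c d = orb_zero C S X Y r"
  proof (rule ext_evt[OF X Y cd(1) z(1)], rule evt_mono[OF evt_conj[OF evt_conj[OF cd(2) z(2)] evt_ge[of m0]]])
    fix M assume H: "(atl r (orb_add C S X Y r c d) M = cAdd C (Spow S M X) (Spow S (lv r M) Y) (atl r c M) (atl r d M) \<and>
      atl r (orb_zero C S X Y r) M = cZero C (Spow S M X) (Spow S (lv r M) Y)) \<and> m0 \<le> M"
    then have M: "m0 \<le> M" by simp
    have "atl r (orb_add C S X Y r c d) M = cAdd C (Spow S M X) (Spow S (lv r M) Y) (atl r c M) (atl r d M)" using H by simp
    also have "\<dots> = cAdd C (Spow S (M - m0) (Spow S m0 X)) (Spow S (M - m0) (Spow S (lv r m0) Y))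
       (Smpow S (M - m0) (Spow S m0 X) (Spow S (lv r m0) Y) (atl r c m0)) (Smpow S (M - m0) (Spow S m0 X) (Spow S (lv r m0) Y) g0)"
      unfolding d_def cls_lift[OF X Y hr M] by (simp only: objX[OF X Y M refl] objY[OF X Y m0 M refl] at_lift_gen[OF X Y c m0 M refl])
    also have "\<dots> = Smpow S (M - m0) (Spow S m0 X) (Spow S (lv r m0) Y) (cAdd C (Spow S m0 X) (Spow S (lv r m0) Y) (atl r c m0) g0)"
      by (rule Smpow_add[OF spow_ob[OF X] spow_ob[OF Y] cm g0(1), symmetric])
    also have "\<dots> = cZero C (Spow S M X) (Spow S (lv r M) Y)"
      unfolding g0(2) Smpow_zero[OF spow_ob[OF X] spow_ob[OF Y]] by (simp only: objX[OF X Y M refl] objY[OF X Y m0 M refl])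
    also have "\<dots> = atl r (orb_zero C S X Y r) M" using H by simp
    finally show "atl r (orb_add C S X Y r c d) M = atl r (orb_zero C S X Y r) M" .
  qed
  then show ?thesis using d by blast
qed

end

end


context
  fixes C :: "('o, 'm, 'k::comm_ring_1) lcat"
  assumes KC: "klin_cat C"
begin
lemma kc_addl: "X \<in> cOb C \<Longrightarrow> Y \<in> cOb C \<Longrightarrow> Z \<in> cOb C \<Longrightarrow> f \<in> cHom C X Y \<Longrightarrow> g \<in> cHom C Y Z \<Longrightarrow> g' \<in> cHom C Y Z \<Longrightarrow>
  cComp C X Y Z (cAdd C Y Z g g') f = cAdd C X Z (cComp C X Y Z g f) (cComp C X Y Z g' f)"
  using kc_bilin(1)[OF KC] by blast
lemma kc_addr: "X \<in> cOb C \<Longrightarrow> Y \<in> cOb C \<Longrightarrow> Z \<in> cOb C \<Longrightarrow> f \<in> cHom C X Y \<Longrightarrow> f' \<in> cHom C X Y \<Longrightarrow> g \<in> cHom C Y Z \<Longrightarrow>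
  cComp C X Y Z g (cAdd C X Y f f') = cAdd C X Z (cComp C X Y Z g f) (cComp C X Y Z g f')"
  using kc_bilin(2)[OF KC] by blast
lemma kc_smull: "X \<in> cOb C \<Longrightarrow> Y \<in> cOb C \<Longrightarrow> Z \<in> cOb C \<Longrightarrow> f \<in> cHom C X Y \<Longrightarrow> g \<in> cHom C Y Z \<Longrightarrow>
  cComp C X Y Z (cSmul C Y Z a g) f = cSmul C X Z a (cComp C X Y Z g f)"
  using kc_bilin(3)[OF KC] by blast
lemma kc_smulr: "X \<in> cOb C \<Longrightarrow> Y \<in> cOb C \<Longrightarrow> Z \<in> cOb C \<Longrightarrow> f \<in> cHom C X Y \<Longrightarrow> g \<in> cHom C Y Z \<Longrightarrow>
  cComp C X Y Z g (cSmul C X Y a f) = cSmul C X Z a (cComp C X Y Z g f)"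
  using kc_bilin(4)[OF KC] by blast
end

lemma lv_lv': "0 \<le> int m + a \<Longrightarrow> c = a + b \<Longrightarrow> lv c m = lv b (lv a m)"
  using lv_lv by simp

context orbS
begin

lemma orb_comp_assoc:
  assumes W: "W \<in> cOb C" and X: "X \<in> cOb C" and Y: "Y \<in> cOb C" and Z: "Z \<in> cOb C"
    and f: "f \<in> orb_hom C S W X a" and g: "g \<in> orb_hom C S X Y b" and h: "h \<in> orb_hom C S Y Z c"
    and ab: "ab = a + b" and bc: "bc = b + c"
  shows "orb_comp C S W Y Z c ab h (orb_comp C S W X Y b a g f) = orb_comp C S W X Z bc a (orb_comp C S X Y Z c b h g) f"
proof -
  note u = comp_props[OF W X Y g f ab]
  note L = comp_props[OF W Y Z h u(1), of "ab + c"]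
  note v = comp_props[OF X Y Z h g bc]
  note R = comp_props[OF W X Z v(1) f, of "ab + c"]
  have abc: "ab + c = a + bc" using ab bc by simp
  note evs = evt_conj[OF evt_conj[OF evt_conj[OF u(2) L(2)[OF refl]] evt_conj[OF evt_lv[OF v(2), of a] R(2)[OF abc]]]
      evt_conj[OF evt_conj[OF at_hom_evt[OF W X f] evt_lv[OF at_hom_evt[OF X Y g], of a]]
        evt_conj[OF evt_lv[OF evt_lv[OF at_hom_evt[OF Y Z h], of b], of a] evt_conj[OF evt_lvl[OF W X, of a] evt_lvl[OF W X, of ab]]]]]
  have lA: "\<And>M. 0 \<le> int M + a \<Longrightarrow> lv ab M = lv b (lv a M)" using lv_lv'[OF _ ab] by blast
  have lB: "\<And>M. 0 \<le> int M + a \<Longrightarrow> 0 \<le> int M + ab \<Longrightarrow> lv bc (lv a M) = lv c (lv b (lv a M))"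
    using lv_lv'[OF _ bc] lv_simp ab by (metis add.assoc)
  show ?thesis
    apply (rule ext_evt[OF W Z L(1)[OF refl] R(1)[OF abc]])
    apply (rule evt_mono[OF evs])
    apply (elim conjE)
    apply (simp add: lA lB)
    apply (rule kc_assoc[OF KC spow_ob[OF W] spow_ob[OF X] spow_ob[OF Y] spow_ob[OF Z]])
      apply assumption+
    done
qed

end


context orbS
begin

lemma orb_id_left:
  assumes X: "X \<in> cOb C" and Y: "Y \<in> cOb C" and f: "f \<in> orb_hom C S X Y a" and z: "z = 0"
  shows "orb_comp C S X Y Y z a (orb_cls C S Y Y 0 (0, 0, cId C Y)) f = f"
proof -
  note i = id_props[OF Y]
  note u = comp_props[OF X Y Y i(1) f, of a, unfolded add_0_right, OF refl]
  show ?thesis unfolding z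
    apply (rule ext_evt[OF X Y u(1) f])
    apply (rule evt_mono[OF evt_conj[OF u(2) evt_conj[OF evt_lv[OF i(2), of a] at_hom_evt[OF X Y f]]]])
    apply (elim conjE)
    apply (simp add: kc_idl[OF KC spow_ob[OF X] spow_ob[OF Y]])
    done
qed

lemma orb_id_right:
  assumes X: "X \<in> cOb C" and Y: "Y \<in> cOb C" and f: "f \<in> orb_hom C S X Y a" and z: "z = 0"
  shows "orb_comp C S X X Y a z f (orb_cls C S X X 0 (0, 0, cId C X)) = f"
proof -
  note i = id_props[OF X]
  note u = comp_props[OF X X Y f i(1), of a, unfolded add_0_left, OF refl]
  show ?thesis unfolding z
    apply (rule ext_evt[OF X Y u(1) f])
    apply (rule evt_mono[OF evt_conj[OF u(2) evt_conj[OF i(2) at_hom_evt[OF X Y f]]]])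
    apply (elim conjE)
    apply (simp add: kc_idr[OF KC spow_ob[OF X] spow_ob[OF Y]])
    done
qed

context
  fixes X Y Z and a b r :: int
  assumes X: "X \<in> cOb C" and Y: "Y \<in> cOb C" and Z: "Z \<in> cOb C" and r: "r = a + b"
begin

lemma lvr: "0 \<le> int M + a \<Longrightarrow> lv r M = lv b (lv a M)" using lv_lv'[OF _ r] .

lemma orb_bil1:
  assumes f: "f \<in> orb_hom C S X Y a" and g: "g \<in> orb_hom C S Y Z b" and g': "g' \<in> orb_hom C S Y Z b"
  shows "orb_comp C S X Y Z b a (orb_add C S Y Z b g g') f
     = orb_add C S X Z r (orb_comp C S X Y Z b a g f) (orb_comp C S X Y Z b a g' f)"
proof -
  note gg = add_props[OF Y Z g g']
  note L = comp_props[OF X Y Z gg(1) f r]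
  note c1 = comp_props[OF X Y Z g f r] and c2 = comp_props[OF X Y Z g' f r]
  note R = add_props[OF X Z c1(1) c2(1)]
  note evs = evt_conj[OF evt_conj[OF evt_conj[OF L(2) evt_lv[OF gg(2), of a]] evt_conj[OF c1(2) c2(2)]]
     evt_conj[OF evt_conj[OF R(2) at_hom_evt[OF X Y f]]
       evt_conj[OF evt_conj[OF evt_lv[OF at_hom_evt[OF Y Z g], of a] evt_lv[OF at_hom_evt[OF Y Z g'], of a]] evt_lvl[OF X Y, of a]]]]
  show ?thesis
    apply (rule ext_evt[OF X Z L(1) R(1)])
    apply (rule evt_mono[OF evs])
    apply (elim conjE)
    apply (simp add: lvr kc_addl[OF KC spow_ob[OF X] spow_ob[OF Y] spow_ob[OF Z]])
    done
qed

lemma orb_bil2: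
  assumes f: "f \<in> orb_hom C S X Y a" and f': "f' \<in> orb_hom C S X Y a" and g: "g \<in> orb_hom C S Y Z b"
  shows "orb_comp C S X Y Z b a g (orb_add C S X Y a f f')
     = orb_add C S X Z r (orb_comp C S X Y Z b a g f) (orb_comp C S X Y Z b a g f')"
proof -
  note ff = add_props[OF X Y f f']
  note L = comp_props[OF X Y Z g ff(1) r]
  note c1 = comp_props[OF X Y Z g f r] and c2 = comp_props[OF X Y Z g f' r]
  note R = add_props[OF X Z c1(1) c2(1)]
  note evs = evt_conj[OF evt_conj[OF evt_conj[OF L(2) ff(2)] evt_conj[OF c1(2) c2(2)]]
     evt_conj[OF evt_conj[OF R(2) evt_conj[OF at_hom_evt[OF X Y f] at_hom_evt[OF X Y f']]]
       evt_conj[OF evt_lv[OF at_hom_evt[OF Y Z g], of a] evt_lvl[OF X Y, of a]]]]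
  show ?thesis
    apply (rule ext_evt[OF X Z L(1) R(1)])
    apply (rule evt_mono[OF evs])
    apply (elim conjE)
    apply (simp add: lvr kc_addr[OF KC spow_ob[OF X] spow_ob[OF Y] spow_ob[OF Z]])
    done
qed

lemma orb_bil3:
  assumes f: "f \<in> orb_hom C S X Y a" and g: "g \<in> orb_hom C S Y Z b"
  shows "orb_comp C S X Y Z b a (orb_smul C S Y Z b k g) f = orb_smul C S X Z r k (orb_comp C S X Y Z b a g f)"
proof -
  note gg = smul_props[OF Y Z g, of k]
  note L = comp_props[OF X Y Z gg(1) f r]
  note c1 = comp_props[OF X Y Z g f r]
  note R = smul_props[OF X Z c1(1), of k]
  note evs = evt_conj[OF evt_conj[OF evt_conj[OF L(2) evt_lv[OF gg(2), of a]] evt_conj[OF c1(2) R(2)]]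
       evt_conj[OF evt_conj[OF evt_lv[OF at_hom_evt[OF Y Z g], of a] at_hom_evt[OF X Y f]] evt_lvl[OF X Y, of a]]]
  show ?thesis
    apply (rule ext_evt[OF X Z L(1) R(1)])
    apply (rule evt_mono[OF evs])
    apply (elim conjE)
    apply (simp add: lvr kc_smull[OF KC spow_ob[OF X] spow_ob[OF Y] spow_ob[OF Z]])
    done
qed

lemma orb_bil4:
  assumes f: "f \<in> orb_hom C S X Y a" and g: "g \<in> orb_hom C S Y Z b"
  shows "orb_comp C S X Y Z b a g (orb_smul C S X Y a k f) = orb_smul C S X Z r k (orb_comp C S X Y Z b a g f)"
proof -
  note ff = smul_props[OF X Y f, of k]
  note L = comp_props[OF X Y Z g ff(1) r]
  note c1 = comp_props[OF X Y Z g f r]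
  note R = smul_props[OF X Z c1(1), of k]
  note evs = evt_conj[OF evt_conj[OF evt_conj[OF L(2) ff(2)] evt_conj[OF c1(2) R(2)]]
       evt_conj[OF evt_conj[OF evt_lv[OF at_hom_evt[OF Y Z g], of a] at_hom_evt[OF X Y f]] evt_lvl[OF X Y, of a]]]
  show ?thesis
    apply (rule ext_evt[OF X Z L(1) R(1)])
    apply (rule evt_mono[OF evs])
    apply (elim conjE)
    apply (simp add: lvr kc_smulr[OF KC spow_ob[OF X] spow_ob[OF Y] spow_ob[OF Z]])
    done
qed

end

end


lemma sm_ob: "cOb (orbit_smash C S) = cOb C \<times> UNIV" by (simp add: orbit_smash_def)
lemma sm_simps:
  "cHom (orbit_smash C S) (X, i) (Y, j) = orb_hom C S X Y (i - j)"
  "cComp (orbit_smash C S) (X, i) (Y, j) (Z, k) g f = orb_comp C S X Y Z (j - k) (i - j) g f"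
  "cId (orbit_smash C S) (X, i) = orb_cls C S X X 0 (0, 0, cId C X)"
  "cAdd (orbit_smash C S) (X, i) (Y, j) = orb_add C S X Y (i - j)"
  "cZero (orbit_smash C S) (X, i) (Y, j) = orb_zero C S X Y (i - j)"
  "cSmul (orbit_smash C S) (X, i) (Y, j) = orb_smul C S X Y (i - j)"
  by (simp_all add: orbit_smash_def)

lemma ball_sm: "(\<forall>x\<in>cOb (orbit_smash C S). P x) \<longleftrightarrow> (\<forall>X\<in>cOb C. \<forall>i. P (X, i))"
  unfolding sm_ob by auto

context orbS
begin

lemma sm_hm:
  assumes X: "X \<in> cOb C" and Y: "Y \<in> cOb C"
  shows "hom_module (orbit_smash C S) (X, i) (Y, j)"
  unfolding hom_module_def Let_def sm_simps
  apply (intro conjI ballI allI)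
  apply (rule zero_props(1)[OF X Y])
  apply (erule (1) add_props(1)[OF X Y])
  apply (erule smul_props(1)[OF X Y])
  apply (erule (2) orb_add_assoc[OF X Y])
  apply (erule (1) orb_add_comm[OF X Y])
  apply (erule orb_zero_add[OF X Y])
  apply (erule orb_neg[OF X Y])
  apply (erule (1) orb_smul_add[OF X Y])
  apply (erule orb_add_smul[OF X Y])
  apply (erule orb_mul_smul[OF X Y])
  apply (erule orb_one_smul[OF X Y])
  done

lemma sm_klin: "klin_cat (orbit_smash C S)"
  unfolding klin_cat_def ball_sm sm_simps
  apply (intro conjI ballI allI)
  subgoal for X i Y j by (rule sm_hm)
  subgoal for X i using id_props(1) by simp
  subgoal for X i Y j Z k f g by (rule comp_props(1), assumption+, simp)
  subgoal for W i X j Y k Z l f g h by (rule orb_comp_assoc, assumption+, simp, simp)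
  subgoal for X i Y j f by (rule orb_id_left, assumption+, simp)
  subgoal for X i Y j f by (rule orb_id_right, assumption+, simp)
  subgoal for X i Y j Z k f f' g g' a by (rule orb_bil1, assumption+, simp, assumption+)
  subgoal for X i Y j Z k f f' g g' a by (rule orb_bil2, assumption+, simp, assumption+)
  subgoal for X i Y j Z k f f' g g' a by (rule orb_bil3, assumption+, simp, assumption+)
  subgoal for X i Y j Z k f f' g g' a by (rule orb_bil4, assumption+, simp, assumption+)
  done

end


context
  fixes C :: "('o, 'm, 'k::comm_ring_1) lcat"
  assumes KC: "klin_cat C"
begin
lemma kc_addl2: "X \<in> cOb C \<Longrightarrow> Y \<in> cOb C \<Longrightarrow> Z \<in> cOb C \<Longrightarrow> f \<in> cHom C X Y \<Longrightarrow> g \<in> cHom C Y Z \<Longrightarrow> g' \<in> cHom C Y Z \<Longrightarrow>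
  cComp C X Y Z (cAdd C Y Z g g') f = cAdd C X Z (cComp C X Y Z g f) (cComp C X Y Z g' f)"
  using kc_bilin(1)[OF KC] by blast
lemma kc_addr2: "X \<in> cOb C \<Longrightarrow> Y \<in> cOb C \<Longrightarrow> Z \<in> cOb C \<Longrightarrow> f \<in> cHom C X Y \<Longrightarrow> f' \<in> cHom C X Y \<Longrightarrow> g \<in> cHom C Y Z \<Longrightarrow>
  cComp C X Y Z g (cAdd C X Y f f') = cAdd C X Z (cComp C X Y Z g f) (cComp C X Y Z g f')"
  using kc_bilin(2)[OF KC] by blast
lemma kc_smull2: "X \<in> cOb C \<Longrightarrow> Y \<in> cOb C \<Longrightarrow> Z \<in> cOb C \<Longrightarrow> f \<in> cHom C X Y \<Longrightarrow> g \<in> cHom C Y Z \<Longrightarrow>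
  cComp C X Y Z (cSmul C Y Z a g) f = cSmul C X Z a (cComp C X Y Z g f)"
  using kc_bilin(3)[OF KC] by blast
lemma kc_smulr2: "X \<in> cOb C \<Longrightarrow> Y \<in> cOb C \<Longrightarrow> Z \<in> cOb C \<Longrightarrow> f \<in> cHom C X Y \<Longrightarrow> g \<in> cHom C Y Z \<Longrightarrow>
  cComp C X Y Z g (cSmul C X Y a f) = cSmul C X Z a (cComp C X Y Z g f)"
  using kc_bilin(4)[OF KC] by blast
end

lemma kf_fid: "klin_cat C \<Longrightarrow> klin_functor C C fid"
  unfolding klin_functor_def by simp

lemma kf_compose:
  assumes F: "klin_functor C D F" and G: "klin_functor D E G"
  shows "klin_functor C E (fun_comp G F)"
  unfolding klin_functor_def fun_comp_simps
  apply (intro conjI ballI allI)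
  subgoal by (rule kf_C[OF F])
  subgoal by (rule kf_D[OF G])
  subgoal for X by (intro kf_ob[OF G] kf_ob[OF F])
  subgoal for X Y f by (intro kf_hom[OF G] kf_ob[OF F] kf_hom[OF F])
  subgoal for X by (simp add: kf_id[OF F] kf_id[OF G] kf_ob[OF F])
  subgoal for X Y Z f g by (simp add: kf_comp[OF F] kf_comp[OF G] kf_ob[OF F] kf_hom[OF F])
  subgoal for X Y f g a by (simp add: kf_add[OF F] kf_add[OF G] kf_ob[OF F] kf_hom[OF F])
  subgoal for X Y f g a by (simp add: kf_smul[OF F] kf_smul[OF G] kf_ob[OF F] kf_hom[OF F])
  done

locale ffeq =
  fixes C :: "('o, 'm, 'k::comm_ring_1) lcat" and D :: "('p, 'n, 'k) lcat" and F :: "('o, 'm, 'p, 'n) lfun"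
  assumes KF: "klin_functor C D F" and FA: "faithful C F" and FU: "full C D F" and ES: "esssurj C D F"
begin

lemma KC: "klin_cat C" and KD: "klin_cat D" using kf_C[OF KF] kf_D[OF KF] .
lemma FO: "X \<in> cOb C \<Longrightarrow> fob F X \<in> cOb D" by (rule kf_ob[OF KF])

definition gob where "gob Y = (SOME X. X \<in> cOb C \<and> (\<exists>u. is_iso D Y (fob F X) u))"
definition uu where "uu Y = (SOME u. is_iso D Y (fob F (gob Y)) u)"
definition vv where "vv Y = (SOME v. v \<in> cHom D (fob F (gob Y)) Y \<and> cComp D Y (fob F (gob Y)) Y v (uu Y) = cId D Y
    \<and> cComp D (fob F (gob Y)) Y (fob F (gob Y)) (uu Y) v = cId D (fob F (gob Y)))"

lemma gob: "Y \<in> cOb D \<Longrightarrow> gob Y \<in> cOb C \<and> (\<exists>u. is_iso D Y (fob F (gob Y)) u)"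
  unfolding gob_def by (rule someI_ex) (use ES[unfolded esssurj_def] in blast)

lemma gobO: "Y \<in> cOb D \<Longrightarrow> gob Y \<in> cOb C" using gob by blast
lemma FgO: "Y \<in> cOb D \<Longrightarrow> fob F (gob Y) \<in> cOb D" using gob FO by blast

lemma uu: "Y \<in> cOb D \<Longrightarrow> is_iso D Y (fob F (gob Y)) (uu Y)"
  unfolding uu_def by (rule someI_ex) (use gob in blast)

lemma vv: assumes Y: "Y \<in> cOb D"
  shows "vv Y \<in> cHom D (fob F (gob Y)) Y" "cComp D Y (fob F (gob Y)) Y (vv Y) (uu Y) = cId D Y"
    "cComp D (fob F (gob Y)) Y (fob F (gob Y)) (uu Y) (vv Y) = cId D (fob F (gob Y))"
proof -
  have "\<exists>v. v \<in> cHom D (fob F (gob Y)) Y \<and> cComp D Y (fob F (gob Y)) Y v (uu Y) = cId D Y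
    \<and> cComp D (fob F (gob Y)) Y (fob F (gob Y)) (uu Y) v = cId D (fob F (gob Y))"
    using uu[OF Y] unfolding is_iso_def by blast
  then have "vv Y \<in> cHom D (fob F (gob Y)) Y \<and> cComp D Y (fob F (gob Y)) Y (vv Y) (uu Y) = cId D Y
    \<and> cComp D (fob F (gob Y)) Y (fob F (gob Y)) (uu Y) (vv Y) = cId D (fob F (gob Y))"
    unfolding vv_def by (rule someI_ex)
  then show "vv Y \<in> cHom D (fob F (gob Y)) Y" "cComp D Y (fob F (gob Y)) Y (vv Y) (uu Y) = cId D Y"
    "cComp D (fob F (gob Y)) Y (fob F (gob Y)) (uu Y) (vv Y) = cId D (fob F (gob Y))" by simp_all
qed

lemma uuh: "Y \<in> cOb D \<Longrightarrow> uu Y \<in> cHom D Y (fob F (gob Y))" using iso_hom[OF uu] .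

definition pre where "pre X X' h = (THE f. f \<in> cHom C X X' \<and> fmor F X X' f = h)"

lemma pre: assumes X: "X \<in> cOb C" and X': "X' \<in> cOb C" and h: "h \<in> cHom D (fob F X) (fob F X')"
  shows "pre X X' h \<in> cHom C X X'" "fmor F X X' (pre X X' h) = h"
proof -
  have ex: "\<exists>!f. f \<in> cHom C X X' \<and> fmor F X X' f = h"
    using FU FA X X' h unfolding full_def faithful_def by metis
  show "pre X X' h \<in> cHom C X X'" "fmor F X X' (pre X X' h) = h"
    using theI'[OF ex] unfolding pre_def by simp_all
qed

lemma pre_unique: "X \<in> cOb C \<Longrightarrow> X' \<in> cOb C \<Longrightarrow> f \<in> cHom C X X' \<Longrightarrow> fmor F X X' f = h \<Longrightarrow> pre X X' h = f"
  using pre[of X X' h] FA kf_hom[OF KF] unfolding faithful_def by metis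

definition cj where "cj Y Y' c = cComp D (fob F (gob Y)) Y' (fob F (gob Y')) (uu Y') (cComp D (fob F (gob Y)) Y Y' c (vv Y))"

lemma cjh: "Y \<in> cOb D \<Longrightarrow> Y' \<in> cOb D \<Longrightarrow> c \<in> cHom D Y Y' \<Longrightarrow> cj Y Y' c \<in> cHom D (fob F (gob Y)) (fob F (gob Y'))"
  unfolding cj_def by (intro kc_comp[OF KD] FgO uuh vv(1)) auto

definition GG where "GG = \<lparr>fob = gob, fmor = (\<lambda>Y Y' c. pre (gob Y) (gob Y') (cj Y Y' c))\<rparr>"

lemma GG_simps[simp]: "fob GG Y = gob Y" "fmor GG Y Y' c = pre (gob Y) (gob Y') (cj Y Y' c)"
  by (simp_all add: GG_def)

lemma GGh: "Y \<in> cOb D \<Longrightarrow> Y' \<in> cOb D \<Longrightarrow> c \<in> cHom D Y Y' \<Longrightarrow> fmor GG Y Y' c \<in> cHom C (gob Y) (gob Y')"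
  using pre(1)[OF gobO gobO cjh] by simp

lemma GGh': "Y \<in> cOb D \<Longrightarrow> Y' \<in> cOb D \<Longrightarrow> c \<in> cHom D Y Y' \<Longrightarrow> pre (gob Y) (gob Y') (cj Y Y' c) \<in> cHom C (gob Y) (gob Y')"
  using pre(1)[OF gobO gobO cjh] by simp

lemma FGG': "Y \<in> cOb D \<Longrightarrow> Y' \<in> cOb D \<Longrightarrow> c \<in> cHom D Y Y' \<Longrightarrow> fmor F (gob Y) (gob Y') (pre (gob Y) (gob Y') (cj Y Y' c)) = cj Y Y' c"
  using pre(2)[OF gobO gobO cjh] by simp

lemma FGG: "Y \<in> cOb D \<Longrightarrow> Y' \<in> cOb D \<Longrightarrow> c \<in> cHom D Y Y' \<Longrightarrow> fmor F (gob Y) (gob Y') (fmor GG Y Y' c) = cj Y Y' c"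
  using pre(2)[OF gobO gobO cjh] by simp


lemma kc_assoc_r: "W \<in> cOb D \<Longrightarrow> X \<in> cOb D \<Longrightarrow> Y \<in> cOb D \<Longrightarrow> Z \<in> cOb D \<Longrightarrow>
   f \<in> cHom D W X \<Longrightarrow> g \<in> cHom D X Y \<Longrightarrow> h \<in> cHom D Y Z \<Longrightarrow>
   cComp D W X Z (cComp D X Y Z h g) f = cComp D W Y Z h (cComp D W X Y g f)"
  using kc_assoc[OF KD] by metis

lemma vu_cancel: "Y \<in> cOb D \<Longrightarrow> A \<in> cOb D \<Longrightarrow> x \<in> cHom D A Y \<Longrightarrow>
   cComp D A (fob F (gob Y)) Y (vv Y) (cComp D A Y (fob F (gob Y)) (uu Y) x) = x"
  using kc_assoc[OF KD _ _ FgO _ _ uuh vv(1)] vv(2) kc_idl[OF KD] by metis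

lemma uv_cancel: "Y \<in> cOb D \<Longrightarrow> A \<in> cOb D \<Longrightarrow> x \<in> cHom D A (fob F (gob Y)) \<Longrightarrow>
   cComp D A Y (fob F (gob Y)) (uu Y) (cComp D A (fob F (gob Y)) Y (vv Y) x) = x"
  using kc_assoc[OF KD _ FgO _ FgO _ vv(1) uuh] vv(3) kc_idl[OF KD] FgO by metis

lemmas Dsimps = kc_assoc_r kc_comp[OF KD] vu_cancel uv_cancel FgO uuh vv(1) kc_idl[OF KD] kc_idr[OF KD] vv(2) vv(3)

lemma cj_id: "Y \<in> cOb D \<Longrightarrow> cj Y Y (cId D Y) = cId D (fob F (gob Y))"
  unfolding cj_def by (simp add: Dsimps)

lemma cj_comp: "Y \<in> cOb D \<Longrightarrow> Y' \<in> cOb D \<Longrightarrow> Y'' \<in> cOb D \<Longrightarrow> c \<in> cHom D Y Y' \<Longrightarrow> c' \<in> cHom D Y' Y'' \<Longrightarrow>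
   cj Y Y'' (cComp D Y Y' Y'' c' c) = cComp D (fob F (gob Y)) (fob F (gob Y')) (fob F (gob Y'')) (cj Y' Y'' c') (cj Y Y' c)"
  unfolding cj_def by (simp add: Dsimps)

lemma cj_add: "Y \<in> cOb D \<Longrightarrow> Y' \<in> cOb D \<Longrightarrow> c \<in> cHom D Y Y' \<Longrightarrow> d \<in> cHom D Y Y' \<Longrightarrow>
   cj Y Y' (cAdd D Y Y' c d) = cAdd D (fob F (gob Y)) (fob F (gob Y')) (cj Y Y' c) (cj Y Y' d)"
  unfolding cj_def by (simp add: kc_addl2[OF KD] kc_addr2[OF KD] vv(1) uuh FgO kc_comp[OF KD])

lemma cj_smul: "Y \<in> cOb D \<Longrightarrow> Y' \<in> cOb D \<Longrightarrow> c \<in> cHom D Y Y' \<Longrightarrow>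
   cj Y Y' (cSmul D Y Y' a c) = cSmul D (fob F (gob Y)) (fob F (gob Y')) a (cj Y Y' c)"
  unfolding cj_def by (simp add: kc_smull2[OF KD] kc_smulr2[OF KD] vv(1) uuh FgO kc_comp[OF KD])

lemma GG_functor: "klin_functor D C GG"
  unfolding klin_functor_def
  apply (intro conjI ballI allI)
  subgoal by (rule KD)
  subgoal by (rule KC)
  subgoal for Y by (simp add: gobO)
  subgoal for Y Y' c by (simp only: GG_simps(1)) (rule GGh)
  subgoal for Y by (simp add: cj_id, rule pre_unique[OF gobO gobO kc_id[OF KC gobO]], assumption+, simp add: kf_id[OF KF] gobO)
  subgoal for X Y Z f g
    apply (simp only: GG_simps cj_comp)
    apply (rule pre_unique[OF gobO gobO kc_comp[OF KC gobO gobO gobO GGh' GGh']], assumption+)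
    apply (simp add: kf_comp[OF KF] gobO GGh' FGG')
    done
  subgoal for X Y f g a
    apply (simp only: GG_simps cj_add)
    apply (rule pre_unique[OF gobO gobO hm_addc[OF kc_hm[OF KC gobO gobO] GGh' GGh']], assumption+)
    apply (simp add: kf_add[OF KF] gobO GGh' FGG')
    done
  subgoal for X Y f g a
    apply (simp only: GG_simps cj_smul)
    apply (rule pre_unique[OF gobO gobO hm_smulc[OF kc_hm[OF KC gobO gobO] GGh']], assumption+)
    apply (simp add: kf_smul[OF KF] gobO GGh' FGG')
    done
  done


lemma faithful_eq: "X \<in> cOb C \<Longrightarrow> Y \<in> cOb C \<Longrightarrow> f \<in> cHom C X Y \<Longrightarrow> g \<in> cHom C X Y \<Longrightarrow> fmor F X Y f = fmor F X Y g \<Longrightarrow> f = g"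
  using FA unfolding faithful_def by blast

definition eta where "eta X = pre X (gob (fob F X)) (uu (fob F X))"
definition etai where "etai X = pre (gob (fob F X)) X (vv (fob F X))"

lemma eta: assumes X: "X \<in> cOb C"
  shows "eta X \<in> cHom C X (gob (fob F X))" "fmor F X (gob (fob F X)) (eta X) = uu (fob F X)"
    "etai X \<in> cHom C (gob (fob F X)) X" "fmor F (gob (fob F X)) X (etai X) = vv (fob F X)"
  unfolding eta_def etai_def using pre[OF X gobO[OF FO[OF X]]] pre[OF gobO[OF FO[OF X]] X] uuh[OF FO[OF X]] vv(1)[OF FO[OF X]]
  by auto

lemma eta_iso: assumes X: "X \<in> cOb C" shows "is_iso C X (gob (fob F X)) (eta X)"
proof -
  have gX: "gob (fob F X) \<in> cOb C" using gobO[OF FO[OF X]] .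
  have 1: "cComp C X (gob (fob F X)) X (etai X) (eta X) = cId C X"
    apply (rule faithful_eq[OF X X kc_comp[OF KC X gX X eta(1)[OF X] eta(3)[OF X]] kc_id[OF KC X]])
    apply (simp add: kf_comp[OF KF X gX X eta(1)[OF X] eta(3)[OF X]] eta[OF X] kf_id[OF KF X] vv(2)[OF FO[OF X]])
    done
  have 2: "cComp C (gob (fob F X)) X (gob (fob F X)) (eta X) (etai X) = cId C (gob (fob F X))"
    apply (rule faithful_eq[OF gX gX kc_comp[OF KC gX X gX eta(3)[OF X] eta(1)[OF X]] kc_id[OF KC gX]])
    apply (simp add: kf_comp[OF KF gX X gX eta(3)[OF X] eta(1)[OF X]] eta[OF X] kf_id[OF KF gX] vv(3)[OF FO[OF X]])
    done
  show ?thesis unfolding is_iso_def using eta(1,3)[OF X] 1 2 by blast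
qed

lemma equiv: "klin_equivalence C D F"
  unfolding klin_equivalence_def
proof (intro conjI exI)
  show "klin_functor C D F" by (rule KF)
  show "klin_functor D C GG" by (rule GG_functor)
  show "nat_iso C C fid (fun_comp GG F) eta"
    unfolding nat_iso_def
  proof (intro conjI ballI)
    show "klin_functor C C fid" by (rule kf_fid[OF KC])
    show "klin_functor C C (fun_comp GG F)" by (rule kf_compose[OF KF GG_functor])
    fix X assume X: "X \<in> cOb C"
    show "is_iso C (fob fid X) (fob (fun_comp GG F) X) (eta X)" using eta_iso[OF X] by simp
    fix Y f assume Y: "Y \<in> cOb C" and f: "f \<in> cHom C X Y"
    have gX: "gob (fob F X) \<in> cOb C" using gobO[OF FO[OF X]] .
    have gY: "gob (fob F Y) \<in> cOb C" using gobO[OF FO[OF Y]] .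
    have Ff: "fmor F X Y f \<in> cHom D (fob F X) (fob F Y)" by (rule kf_hom[OF KF X Y f])
    have Gf: "pre (gob (fob F X)) (gob (fob F Y)) (cj (fob F X) (fob F Y) (fmor F X Y f)) \<in> cHom C (gob (fob F X)) (gob (fob F Y))"
      by (rule GGh'[OF FO[OF X] FO[OF Y] Ff])
    show "cComp C (fob fid X) (fob (fun_comp GG F) X) (fob (fun_comp GG F) Y) (fmor (fun_comp GG F) X Y f) (eta X) =
          cComp C (fob fid X) (fob fid Y) (fob (fun_comp GG F) Y) (eta Y) (fmor fid X Y f)"
      apply simp
      apply (rule faithful_eq[OF X gY kc_comp[OF KC X gX gY eta(1)[OF X] Gf] kc_comp[OF KC X Y gY f eta(1)[OF Y]]])
      apply (simp add: kf_comp[OF KF X gX gY eta(1)[OF X] Gf] kf_comp[OF KF X Y gY f eta(1)[OF Y]] eta[OF X] eta[OF Y]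
           FGG'[OF FO[OF X] FO[OF Y] Ff])
      apply (simp add: cj_def Dsimps FO X Y Ff)
      done
  qed
  show "nat_iso D D (fun_comp F GG) fid vv"
    unfolding nat_iso_def
  proof (intro conjI ballI)
    show "klin_functor D D fid" by (rule kf_fid[OF KD])
    show "klin_functor D D (fun_comp F GG)" by (rule kf_compose[OF GG_functor KF])
    fix Y assume Y: "Y \<in> cOb D"
    show "is_iso D (fob (fun_comp F GG) Y) (fob fid Y) (vv Y)"
      unfolding is_iso_def using vv[OF Y] uuh[OF Y] by auto
    fix Y' c assume Y': "Y' \<in> cOb D" and c: "c \<in> cHom D Y Y'"
    show "cComp D (fob (fun_comp F GG) Y) (fob fid Y) (fob fid Y') (fmor fid Y Y' c) (vv Y) =
        cComp D (fob (fun_comp F GG) Y) (fob (fun_comp F GG) Y') (fob fid Y') (vv Y') (fmor (fun_comp F GG) Y Y' c)"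
      using FGG'[OF Y Y' c] by (simp add: cj_def Dsimps Y Y' c)
  qed
qed

end


lemma shift_simps[simp]: "fob shift_functor (X, i) = (X, i - 1)" "fmor shift_functor A B f = f"
  by (simp_all add: shift_functor_def)

definition shinv :: "('o \<times> int, 'x, 'o \<times> int, 'x) lfun" where
  "shinv = \<lparr>fob = (\<lambda>(X, i). (X, i + 1)), fmor = (\<lambda>_ _ f. f)\<rparr>"

lemma shinv_simps[simp]: "fob shinv (X, i) = (X, i + 1)" "fmor shinv A B f = f"
  by (simp_all add: shinv_def)

context orbS
begin

lemma shift_functor: "klin_functor (orbit_smash C S) (orbit_smash C S) shift_functor"
  unfolding klin_functor_def ball_sm
  by (simp add: sm_klin sm_simps sm_ob)

lemma shinv_functor: "klin_functor (orbit_smash C S) (orbit_smash C S) shinv"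
  unfolding klin_functor_def ball_sm
  by (simp add: sm_klin sm_simps sm_ob)

lemma shift_auto: "klin_automorphism (orbit_smash C S) shift_functor"
  unfolding klin_automorphism_def
  apply (intro conjI exI[of _ shinv])
    apply (rule shift_functor)
   apply (rule shinv_functor)
  apply (unfold ball_sm)
  apply simp_all
  done

lemma H_simps[simp]: "fob (H_functor C S) X = (X, 0)" "fmor (H_functor C S) X Y f = orb_cls C S X Y 0 (0, 0, f)"
  by (simp_all add: H_functor_def)

lemma H_rep: "f \<in> cHom C X Y \<Longrightarrow> (0, lv 0 0, f) \<in> orb_reps C S X Y 0"
  unfolding reps_iff by simp

lemma H_in: "X \<in> cOb C \<Longrightarrow> Y \<in> cOb C \<Longrightarrow> f \<in> cHom C X Y \<Longrightarrow> orb_cls C S X Y 0 (0, 0, f) \<in> orb_hom C S X Y 0"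
  using cls_in[OF _ _ H_rep] by simp

lemma H_at: "X \<in> cOb C \<Longrightarrow> Y \<in> cOb C \<Longrightarrow> f \<in> cHom C X Y \<Longrightarrow> atl 0 (orb_cls C S X Y 0 (0, 0, f)) M = Smpow S M X Y f"
  using cls_lift[OF _ _ H_rep, of X Y f M] by simp

lemma H_comp:
  assumes X: "X \<in> cOb C" and Y: "Y \<in> cOb C" and Z: "Z \<in> cOb C" and f: "f \<in> cHom C X Y" and g: "g \<in> cHom C Y Z"
  shows "orb_cls C S X Z 0 (0, 0, cComp C X Y Z g f) = orb_comp C S X Y Z 0 0 (orb_cls C S Y Z 0 (0, 0, g)) (orb_cls C S X Y 0 (0, 0, f))"
proof -
  have r0: "(0::int) = 0 + 0" by simp
  note cp = comp_props[OF X Y Z H_in[OF Y Z g] H_in[OF X Y f] r0]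
  have gf: "cComp C X Y Z g f \<in> cHom C X Z" by (rule kc_comp[OF KC X Y Z f g])
  show ?thesis
  proof (rule ext_evt[OF X Z H_in[OF X Z gf] cp(1)], rule evt_mono[OF cp(2)])
    fix M assume e: "atl 0 (orb_comp C S X Y Z 0 0 (orb_cls C S Y Z 0 (0, 0, g)) (orb_cls C S X Y 0 (0, 0, f))) M =
      cComp C (Spow S M X) (Spow S (lv 0 M) Y) (Spow S (lv 0 (lv 0 M)) Z) (atl 0 (orb_cls C S Y Z 0 (0, 0, g)) (lv 0 M)) (atl 0 (orb_cls C S X Y 0 (0, 0, f)) M)"
    show "atl 0 (orb_cls C S X Z 0 (0, 0, cComp C X Y Z g f)) M = atl 0 (orb_comp C S X Y Z 0 0 (orb_cls C S Y Z 0 (0, 0, g)) (orb_cls C S X Y 0 (0, 0, f))) M"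
      unfolding e by (simp add: H_at[OF X Z gf] H_at[OF Y Z g] H_at[OF X Y f] Smpow_comp[OF X Y Z f g])
  qed
qed

lemma H_add:
  assumes X: "X \<in> cOb C" and Y: "Y \<in> cOb C" and f: "f \<in> cHom C X Y" and g: "g \<in> cHom C X Y"
  shows "orb_cls C S X Y 0 (0, 0, cAdd C X Y f g) = orb_add C S X Y 0 (orb_cls C S X Y 0 (0, 0, f)) (orb_cls C S X Y 0 (0, 0, g))"
proof -
  note cp = add_props[OF X Y H_in[OF X Y f] H_in[OF X Y g]]
  have fg: "cAdd C X Y f g \<in> cHom C X Y" by (rule hm_addc[OF kc_hm[OF KC X Y] f g])
  show ?thesis
  proof (rule ext_evt[OF X Y H_in[OF X Y fg] cp(1)], rule evt_mono[OF cp(2)])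
    fix M assume e: "atl 0 (orb_add C S X Y 0 (orb_cls C S X Y 0 (0, 0, f)) (orb_cls C S X Y 0 (0, 0, g))) M =
      cAdd C (Spow S M X) (Spow S (lv 0 M) Y) (atl 0 (orb_cls C S X Y 0 (0, 0, f)) M) (atl 0 (orb_cls C S X Y 0 (0, 0, g)) M)"
    show "atl 0 (orb_cls C S X Y 0 (0, 0, cAdd C X Y f g)) M = atl 0 (orb_add C S X Y 0 (orb_cls C S X Y 0 (0, 0, f)) (orb_cls C S X Y 0 (0, 0, g))) M"
      unfolding e by (simp add: H_at[OF X Y fg] H_at[OF X Y g] H_at[OF X Y f] Smpow_add[OF X Y f g])
  qed
qed

lemma H_smul:
  assumes X: "X \<in> cOb C" and Y: "Y \<in> cOb C" and f: "f \<in> cHom C X Y"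
  shows "orb_cls C S X Y 0 (0, 0, cSmul C X Y a f) = orb_smul C S X Y 0 a (orb_cls C S X Y 0 (0, 0, f))"
proof -
  note cp = smul_props[OF X Y H_in[OF X Y f], of a]
  have fg: "cSmul C X Y a f \<in> cHom C X Y" by (rule hm_smulc[OF kc_hm[OF KC X Y] f])
  show ?thesis
  proof (rule ext_evt[OF X Y H_in[OF X Y fg] cp(1)], rule evt_mono[OF cp(2)])
    fix M assume e: "atl 0 (orb_smul C S X Y 0 a (orb_cls C S X Y 0 (0, 0, f))) M =
      cSmul C (Spow S M X) (Spow S (lv 0 M) Y) a (atl 0 (orb_cls C S X Y 0 (0, 0, f)) M)"
    show "atl 0 (orb_cls C S X Y 0 (0, 0, cSmul C X Y a f)) M = atl 0 (orb_smul C S X Y 0 a (orb_cls C S X Y 0 (0, 0, f))) M"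
      unfolding e by (simp add: H_at[OF X Y fg] H_at[OF X Y f] Smpow_smul[OF X Y f])
  qed
qed

lemma H_functor: "klin_functor C (orbit_smash C S) (H_functor C S)"
  unfolding klin_functor_def
  by (simp add: KC sm_klin sm_ob sm_simps H_in H_comp H_add H_smul)

lemma H_faithful: "faithful C (H_functor C S)"
  unfolding faithful_def
proof (intro ballI impI)
  fix X Y f g assume X: "X \<in> cOb C" and Y: "Y \<in> cOb C" and f: "f \<in> cHom C X Y" and g: "g \<in> cHom C X Y"
    and e: "fmor (H_functor C S) X Y f = fmor (H_functor C S) X Y g"
  have "atl 0 (orb_cls C S X Y 0 (0, 0, f)) 0 = atl 0 (orb_cls C S X Y 0 (0, 0, g)) 0" using e by simp
  then show "f = g" using H_at[OF X Y f, of 0] H_at[OF X Y g, of 0] by simp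
qed

lemma H_full: "full C (orbit_smash C S) (H_functor C S)"
  unfolding full_def
proof (intro ballI)
  fix X Y c assume X: "X \<in> cOb C" and Y: "Y \<in> cOb C" and c: "c \<in> cHom (orbit_smash C S) (fob (H_functor C S) X) (fob (H_functor C S) Y)"
  have c': "c \<in> orb_hom C S X Y 0" using c by (simp add: sm_simps)
  have fh: "atl 0 c 0 \<in> cHom C X Y" using at_hom[OF X Y c', of 0] by simp
  have "orb_cls C S X Y 0 (0, 0, atl 0 c 0) = c"
    by (rule cls_ext[OF X Y H_in[OF X Y fh] c', of 0]) (simp_all add: H_at[OF X Y fh])
  then show "\<exists>f\<in>cHom C X Y. fmor (H_functor C S) X Y f = c" using fh by auto
qed

end


lemma Spow_1[simp]: "Spow S 1 X = fob S X" by (simp add: Spow_def)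
lemma Spow_fob[simp]: "Spow S k (fob S X) = Spow S (Suc k) X" by (simp add: Spow_def funpow_swap1)
lemma Smpow_fob: "Smpow S k (fob S X) (fob S Y) (fmor S X Y f) = Smpow S (Suc k) X Y f"
  using Smpow_Smpow[of S k 1 X Y f] by (simp add: Spow_Suc)

context orbS
begin

lemma orb_inv_comp:
  assumes X: "X \<in> cOb C" and Y: "Y \<in> cOb C"
    and fr: "(n, p, f) \<in> orb_reps C S X Y r" and gr: "(p, n, g) \<in> orb_reps C S Y X s" and z: "r + s = 0"
    and gf: "cComp C (Spow S n X) (Spow S p Y) (Spow S n X) g f = cId C (Spow S n X)"
  shows "orb_comp C S X Y X s r (orb_cls C S Y X s (p, n, g)) (orb_cls C S X Y r (n, p, f)) = orb_cls C S X X 0 (0, 0, cId C X)"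
proof -
  have pn: "p = lv r n" and nr: "0 \<le> int n + r" using at_cls(3,2)[OF X Y fr] by auto
  have np: "n = lv s p" and ps: "0 \<le> int p + s" using at_cls(3,2)[OF Y X gr] by auto
  have fr': "(n, lv r n, f) \<in> orb_reps C S X Y r" using fr pn by simp
  have gr': "(p, lv s p, g) \<in> orb_reps C S Y X s" using gr np by simp
  have fh: "f \<in> cHom C (Spow S n X) (Spow S p Y)" and gh: "g \<in> cHom C (Spow S p Y) (Spow S n X)"
    using fr gr unfolding reps_iff by auto
  note u = cls_in[OF X Y fr] and w = cls_in[OF Y X gr]
  have z0: "0 = r + s" using z by simp
  note cp = comp_props[OF X Y X w u z0] and i = id_props[OF X]
  show ?thesis
  proof (rule ext_evt[OF X X cp(1) i(1)], rule evt_mono[OF evt_conj[OF evt_conj[OF cp(2) i(2)] evt_ge[of n]]])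
    fix M assume H: "(atl 0 (orb_comp C S X Y X s r (orb_cls C S Y X s (p, n, g)) (orb_cls C S X Y r (n, p, f))) M =
          cComp C (Spow S M X) (Spow S (lv r M) Y) (Spow S (lv s (lv r M)) X) (atl s (orb_cls C S Y X s (p, n, g)) (lv r M))
           (atl r (orb_cls C S X Y r (n, p, f)) M) \<and>
          atl 0 (orb_cls C S X X 0 (0, 0, cId C X)) M = cId C (Spow S M X)) \<and> n \<le> M"
    then have M: "n \<le> M" by simp
    define k where "k = M - n"
    have lrM: "lv r M = k + p" using lv_shift[OF nr M] pn unfolding k_def by simp
    have pL: "p \<le> lv r M" and kk: "k = lv r M - p" using lrM by auto
    have lsr: "lv s (lv r M) = M" using lv_lv[of M r s] nr M z unfolding lv_def by simp
    have au: "atl r (orb_cls C S X Y r (n, p, f)) M = Smpow S k (Spow S n X) (Spow S p Y) f"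
      using cls_lift[OF X Y fr' M] pn unfolding k_def by simp
    have aw: "atl s (orb_cls C S Y X s (p, n, g)) (lv r M) = Smpow S k (Spow S p Y) (Spow S n X) g"
      using cls_lift[OF Y X gr' pL] np kk by simp
    have oX: "Spow S k (Spow S n X) = Spow S M X" unfolding k_def using M by simp
    have oY: "Spow S k (Spow S p Y) = Spow S (lv r M) Y" using lrM by simp
    have "atl 0 (orb_comp C S X Y X s r (orb_cls C S Y X s (p, n, g)) (orb_cls C S X Y r (n, p, f))) M
        = cComp C (Spow S k (Spow S n X)) (Spow S k (Spow S p Y)) (Spow S k (Spow S n X))
            (Smpow S k (Spow S p Y) (Spow S n X) g) (Smpow S k (Spow S n X) (Spow S p Y) f)"
      using H unfolding au aw lsr oX oY by simp
    also have "\<dots> = Smpow S k (Spow S n X) (Spow S n X) (cComp C (Spow S n X) (Spow S p Y) (Spow S n X) g f)"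
      by (rule Smpow_comp[OF spow_ob[OF X] spow_ob[OF Y] spow_ob[OF X] fh gh, symmetric])
    also have "\<dots> = cId C (Spow S M X)" unfolding gf Smpow_id[OF spow_ob[OF X]] oX ..
    also have "\<dots> = atl 0 (orb_cls C S X X 0 (0, 0, cId C X)) M" using H by simp
    finally show "atl 0 (orb_comp C S X Y X s r (orb_cls C S Y X s (p, n, g)) (orb_cls C S X Y r (n, p, f))) M
       = atl 0 (orb_cls C S X X 0 (0, 0, cId C X)) M" .
  qed
qed

lemma sm_iso:
  assumes X: "X \<in> cOb C" and Y: "Y \<in> cOb C"
    and fr: "(n, p, f) \<in> orb_reps C S X Y (i - j)" and gr: "(p, n, g) \<in> orb_reps C S Y X (j - i)"
    and gf: "cComp C (Spow S n X) (Spow S p Y) (Spow S n X) g f = cId C (Spow S n X)"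
    and fg: "cComp C (Spow S p Y) (Spow S n X) (Spow S p Y) f g = cId C (Spow S p Y)"
  shows "is_iso (orbit_smash C S) (X, i) (Y, j) (orb_cls C S X Y (i - j) (n, p, f))"
  unfolding is_iso_def sm_simps
  apply (intro conjI bexI[of _ "orb_cls C S Y X (j - i) (p, n, g)"])
     apply (rule cls_in[OF X Y fr])
    apply (simp add: orb_inv_comp[OF X Y fr gr _ gf])
   apply (simp add: orb_inv_comp[OF Y X gr fr _ fg])
  apply (rule cls_in[OF Y X gr])
  done

end


lemma Spow_Suc0[simp]: "Spow S (Suc 0) X = fob S X" by (simp add: Spow_def)

context orbS
begin

lemma Smpow_iso:
  assumes A: "A \<in> cOb C" and B: "B \<in> cOb C" and u: "is_iso C A B u"
  shows "is_iso C (Spow S k A) (Spow S k B) (Smpow S k A B u)"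
proof -
  obtain v where v: "is_iso C B A v" "cComp C A B A v u = cId C A" "cComp C B A B u v = cId C B"
    using iso_inv[OF u] .
  have uh: "u \<in> cHom C A B" and vh: "v \<in> cHom C B A" using iso_hom[OF u] iso_hom[OF v(1)] .
  show ?thesis unfolding is_iso_def
    apply (intro conjI bexI[of _ "Smpow S k B A v"])
       apply (rule Smpow_hom[OF A B uh])
      apply (simp add: Smpow_comp[OF A B A uh vh, symmetric] v(2) Smpow_id[OF A])
     apply (simp add: Smpow_comp[OF B A B vh uh, symmetric] v(3) Smpow_id[OF B])
    apply (rule Smpow_hom[OF B A vh])
    done
qed

lemma Spow_surj:
  assumes ES: "esssurj C C S" and X: "X \<in> cOb C"
  shows "\<exists>Y\<in>cOb C. \<exists>f. is_iso C X (Spow S k Y) f"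
proof (induction k)
  case 0 then show ?case using X id_iso[OF KC X] by auto
next
  case (Suc k)
  then obtain Y f where Y: "Y \<in> cOb C" and f: "is_iso C X (Spow S k Y) f" by blast
  obtain Y' u where Y': "Y' \<in> cOb C" and u: "is_iso C Y (fob S Y') u"
    using ES Y unfolding esssurj_def by blast
  have SY': "fob S Y' \<in> cOb C" using kf_ob[OF KF Y'] .
  have "is_iso C (Spow S k Y) (Spow S k (fob S Y')) (Smpow S k Y (fob S Y') u)"
    by (rule Smpow_iso[OF Y SY' u])
  then have "is_iso C (Spow S k Y) (Spow S (Suc k) Y') (Smpow S k Y (fob S Y') u)" by simp
  then have "is_iso C X (Spow S (Suc k) Y') (cComp C X (Spow S k Y) (Spow S (Suc k) Y') (Smpow S k Y (fob S Y') u) f)"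
    by (rule iso_comp[OF KC X spow_ob[OF Y] spow_ob[OF Y'] f])
  then show ?case using Y' by blast
qed

lemma H_esssurj:
  assumes ES: "esssurj C C S"
  shows "esssurj C (orbit_smash C S) (H_functor C S)"
  unfolding esssurj_def ball_sm H_simps
proof (intro ballI allI)
  fix X i assume X: "X \<in> cOb C"
  show "\<exists>Y\<in>cOb C. \<exists>u. is_iso (orbit_smash C S) (X, i) (Y, 0) u"
  proof (cases "i \<le> 0")
    case True
    define n where "n = nat (- i)"
    define Y where "Y = Spow S n X"
    have Yo: "Y \<in> cOb C" unfolding Y_def by (rule spow_ob[OF X])
    have idh: "cId C Y \<in> cHom C Y Y" by (rule kc_id[OF KC Yo])
    have fr: "(n, 0, cId C Y) \<in> orb_reps C S X Y (i - 0)" unfolding reps_iff using idh True unfolding n_def Y_def by simp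
    have gr: "(0, n, cId C Y) \<in> orb_reps C S Y X (0 - i)" unfolding reps_iff using idh True unfolding n_def Y_def by simp
    have ii: "cComp C Y Y Y (cId C Y) (cId C Y) = cId C Y" by (rule kc_idl[OF KC Yo Yo idh])
    have "is_iso (orbit_smash C S) (X, i) (Y, 0) (orb_cls C S X Y (i - 0) (n, 0, cId C Y))"
      by (rule sm_iso[OF X Yo fr gr]) (simp_all add: Y_def[symmetric] ii)
    then show ?thesis using Yo by blast
  next
    case False
    define p where "p = nat i"
    obtain Y f where Yo: "Y \<in> cOb C" and f: "is_iso C X (Spow S p Y) f" using Spow_surj[OF ES X] by blast
    obtain g where g: "is_iso C (Spow S p Y) X g" "cComp C X (Spow S p Y) X g f = cId C X"
        "cComp C (Spow S p Y) X (Spow S p Y) f g = cId C (Spow S p Y)" using iso_inv[OF f] .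
    have fr: "(0, p, f) \<in> orb_reps C S X Y (i - 0)" unfolding reps_iff using iso_hom[OF f] False unfolding p_def by simp
    have gr: "(p, 0, g) \<in> orb_reps C S Y X (0 - i)" unfolding reps_iff using iso_hom[OF g(1)] False unfolding p_def by simp
    have "is_iso (orbit_smash C S) (X, i) (Y, 0) (orb_cls C S X Y (i - 0) (0, p, f))"
      by (rule sm_iso[OF X Yo fr gr]) (simp_all add: g)
    then show ?thesis using Yo by blast
  qed
qed

definition etaS where "etaS X = orb_cls C S X (fob S X) (-1) (1, 0, cId C (fob S X))"

lemma eta_rep: "X \<in> cOb C \<Longrightarrow> (1, lv (-1) 1, cId C (fob S X)) \<in> orb_reps C S X (fob S X) (-1)"
  unfolding reps_iff lv_def using kc_id[OF KC kf_ob[OF KF]] by simp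

lemma eta_in: "X \<in> cOb C \<Longrightarrow> etaS X \<in> orb_hom C S X (fob S X) (-1)"
  unfolding etaS_def using cls_in[OF _ kf_ob[OF KF] eta_rep] by (simp add: lv_def)

lemma eta_at: assumes X: "X \<in> cOb C" and M: "1 \<le> M" shows "atl (-1) (etaS X) M = cId C (Spow S M X)"
proof -
  have "atl (-1) (etaS X) M = Smpow S (M - 1) (Spow S 1 X) (Spow S (lv (-1) 1) (fob S X)) (cId C (fob S X))"
    unfolding etaS_def using cls_lift[OF X kf_ob[OF KF X] eta_rep[OF X] M] by (simp add: lv_def)
  also have "\<dots> = cId C (Spow S M X)" using Smpow_id[OF kf_ob[OF KF X], of "M - 1"] M by (simp add: lv_def)
  finally show ?thesis .
qed

lemma eta_nat:
  assumes X: "X \<in> cOb C" and Y: "Y \<in> cOb C" and f: "f \<in> cHom C X Y"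
  shows "orb_comp C S X (fob S X) (fob S Y) 0 (-1) (orb_cls C S (fob S X) (fob S Y) 0 (0, 0, fmor S X Y f)) (etaS X)
       = orb_comp C S X Y (fob S Y) (-1) 0 (etaS Y) (orb_cls C S X Y 0 (0, 0, f))"
proof -
  have SX: "fob S X \<in> cOb C" and SY: "fob S Y \<in> cOb C" using kf_ob[OF KF X] kf_ob[OF KF Y] .
  have Sf: "fmor S X Y f \<in> cHom C (fob S X) (fob S Y)" using kf_hom[OF KF X Y f] .
  have r1: "(-1::int) = -1 + 0" and r2: "(-1::int) = 0 + -1" by simp_all
  note e1 = comp_props[OF X SX SY H_in[OF SX SY Sf] eta_in[OF X] r1]
  note e2 = comp_props[OF X Y SY eta_in[OF Y] H_in[OF X Y f] r2]
  show ?thesis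
  proof (rule ext_evt[OF X SY e1(1) e2(1)], rule evt_mono[OF evt_conj[OF evt_conj[OF e1(2) e2(2)] evt_ge[of 1]]])
    fix M assume H: "(atl (- 1) (orb_comp C S X (fob S X) (fob S Y) 0 (- 1) (orb_cls C S (fob S X) (fob S Y) 0 (0, 0, fmor S X Y f)) (etaS X)) M =
         cComp C (Spow S M X) (Spow S (lv (- 1) M) (fob S X)) (Spow S (lv 0 (lv (- 1) M)) (fob S Y))
          (atl 0 (orb_cls C S (fob S X) (fob S Y) 0 (0, 0, fmor S X Y f)) (lv (- 1) M)) (atl (- 1) (etaS X) M) \<and>
         atl (- 1) (orb_comp C S X Y (fob S Y) (- 1) 0 (etaS Y) (orb_cls C S X Y 0 (0, 0, f))) M =
         cComp C (Spow S M X) (Spow S (lv 0 M) Y) (Spow S (lv (- 1) (lv 0 M)) (fob S Y)) (atl (- 1) (etaS Y) (lv 0 M))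
          (atl 0 (orb_cls C S X Y 0 (0, 0, f)) M)) \<and> 1 \<le> M"
    then have M: "1 \<le> M" by simp
    have lm: "lv (-1) M = M - Suc 0" unfolding lv_def using M by simp
    have sM: "Suc (M - Suc 0) = M" using M by simp
    have fM: "Smpow S M X Y f \<in> cHom C (Spow S M X) (Spow S M Y)" by (rule Smpow_hom[OF X Y f])
    show "atl (- 1) (orb_comp C S X (fob S X) (fob S Y) 0 (- 1) (orb_cls C S (fob S X) (fob S Y) 0 (0, 0, fmor S X Y f)) (etaS X)) M =
      atl (- 1) (orb_comp C S X Y (fob S Y) (- 1) 0 (etaS Y) (orb_cls C S X Y 0 (0, 0, f))) M"
      using H by (simp add: lm sM eta_at[OF X M] eta_at[OF Y M] H_at[OF SX SY Sf] H_at[OF X Y f] Smpow_fob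
          kc_idl[OF KC spow_ob[OF X] spow_ob[OF Y] fM] kc_idr[OF KC spow_ob[OF X] spow_ob[OF Y] fM])
  qed
qed

lemma eta_iso_sm: "X \<in> cOb C \<Longrightarrow> is_iso (orbit_smash C S) (X, -1) (fob S X, 0) (etaS X)"
proof -
  assume X: "X \<in> cOb C"
  have SX: "fob S X \<in> cOb C" using kf_ob[OF KF X] .
  have idh: "cId C (fob S X) \<in> cHom C (fob S X) (fob S X)" by (rule kc_id[OF KC SX])
  have fr: "(1, 0, cId C (fob S X)) \<in> orb_reps C S X (fob S X) (-1 - 0)" unfolding reps_iff using idh by simp
  have gr: "(0, 1, cId C (fob S X)) \<in> orb_reps C S (fob S X) X (0 - -1)" unfolding reps_iff using idh by simp
  have ii: "cComp C (fob S X) (fob S X) (fob S X) (cId C (fob S X)) (cId C (fob S X)) = cId C (fob S X)"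
    by (rule kc_idl[OF KC SX SX idh])
  show ?thesis using sm_iso[OF X SX fr gr] unfolding etaS_def by (simp add: ii)
qed

lemma nat_part: "nat_iso C (orbit_smash C S) (fun_comp shift_functor (H_functor C S)) (fun_comp (H_functor C S) S) etaS"
  unfolding nat_iso_def
  apply (intro conjI ballI)
     apply (rule kf_compose[OF H_functor shift_functor])
    apply (rule kf_compose[OF KF H_functor])
   apply (simp add: eta_iso_sm)
  apply (simp add: sm_simps eta_nat)
  done

end

theorem mainTheorem17:
  fixes C :: "('o, 'm, 'k::comm_ring_1) lcat" and S :: "('o, 'm, 'o, 'm) lfun"
  assumes "klin_equivalence C C S"
  shows "klin_automorphism (orbit_smash C S) shift_functor
       \<and> klin_equivalence C (orbit_smash C S) (H_functor C S)
       \<and> (\<exists>\<eta>. nat_iso C (orbit_smash C S) (fun_comp shift_functor (H_functor C S))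
                                        (fun_comp (H_functor C S) S) \<eta>)"
proof -
  have KF: "klin_functor C C S" using assms unfolding klin_equivalence_def by blast
  have P: "faithful C S \<and> full C C S \<and> esssurj C C S" by (rule equiv_props[OF assms])
  interpret orbS C S using KF P by unfold_locales auto
  have ES: "esssurj C C S" using P by blast
  have E: "klin_equivalence C (orbit_smash C S) (H_functor C S)"
    by (rule ffeq.equiv, unfold_locales, rule H_functor, rule H_faithful, rule H_full, rule H_esssurj[OF ES])
  show ?thesis using shift_auto E nat_part by blast
qed


end
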